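(* Let $R$ be a commutative noetherian ring, $\mathfrak{a}$ an ideal contained in the Jacobson radical of $R$, and $M$ a finitely generated $R$-module. The maps $f\colon C_{\mathfrak{a}}(M)\to\operatorname{Hom}_R(\widehat{R}^{\mathfrak{a}},M)$, $f(m)(r)=rm$, and $e\colon\operatorname{Hom}_R(\widehat{R}^{\mathfrak{a}},M)\to C_{\mathfrak{a}}(M)$, $e(\varphi)=\varphi(1)$, are well defined and are mutually inverse isomorphisms. In particular, $\operatorname{Hom}_R(\widehat{R}^{\mathfrak{a}},M)$ is a finitely generated $R$-module.
   Context: $\widehat{R}^{\mathfrak{a}}$ is the $\mathfrak{a}$-adic completion of $R$. A module $N$ is $\mathfrak{a}$-adically complete if $N\to\varprojlim_n N/\mathfrak{a}^nN$ is an isomorphism. $C_{\mathfrak{a}}(M)$ denotes the unique maximal $\mathfrak{a}$-adically complete $R$-submodule of $M$ (it exists and is naturally an $\widehat{R}^{\mathfrak{a}}$-module, so $f$ makes sense). *)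

theory Defs
  imports Complex_Main
begin

definition is_ideal :: "'r::comm_ring_1 set \<Rightarrow> bool" where
  "is_ideal I \<longleftrightarrow> module.subspace ((*)::'r \<Rightarrow> 'r \<Rightarrow> 'r) I"

definition ideal_gen :: "'r::comm_ring_1 set \<Rightarrow> 'r set" where
  "ideal_gen S = module.span ((*)::'r \<Rightarrow> 'r \<Rightarrow> 'r) S"

definition noetherian_ring :: "'r::comm_ring_1 itself \<Rightarrow> bool" where
  "noetherian_ring _ \<longleftrightarrow> (\<forall>I::'r set. is_ideal I \<longrightarrow> (\<exists>S. finite S \<and> I = ideal_gen S))"

definition maximal_ideal :: "'r::comm_ring_1 set \<Rightarrow> bool" where
  "maximal_ideal m \<longleftrightarrow> is_ideal m \<and> m \<noteq> UNIV \<and>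
     (\<forall>J. is_ideal J \<and> m \<subseteq> J \<longrightarrow> J = m \<or> J = UNIV)"

definition jacobson_radical :: "'r::comm_ring_1 set" where
  "jacobson_radical = \<Inter> {m. maximal_ideal m}"

definition ideal_pow :: "'r::comm_ring_1 set \<Rightarrow> nat \<Rightarrow> 'r set" where
  "ideal_pow a n = ideal_gen {prod_list xs | xs. length xs = n \<and> set xs \<subseteq> a}"

definition fin_gen_module :: "('r::comm_ring_1 \<Rightarrow> 'm::ab_group_add \<Rightarrow> 'm) \<Rightarrow> bool" where
  "fin_gen_module scale \<longleftrightarrow> (\<exists>S. finite S \<and> module.span scale S = UNIV)"

definition adic_sub :: "('r::comm_ring_1 \<Rightarrow> 'm::ab_group_add \<Rightarrow> 'm) \<Rightarrow> 'r set \<Rightarrow> nat \<Rightarrow> 'm set \<Rightarrow> 'm set" where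
  "adic_sub scale a n N = module.span scale {scale r x | r x. r \<in> ideal_pow a n \<and> x \<in> N}"

text \<open>The inverse limit lim_n N / a^n N, realised as compatible sequences of cosets.\<close>
definition adic_lim :: "('r::comm_ring_1 \<Rightarrow> 'm::ab_group_add \<Rightarrow> 'm) \<Rightarrow> 'r set \<Rightarrow> 'm set \<Rightarrow> (nat \<Rightarrow> 'm set) set" where
  "adic_lim scale a N = {c. \<forall>n. (\<exists>x\<in>N. c n = (+) x ` adic_sub scale a n N) \<and> c (Suc n) \<subseteq> c n}"

definition adically_complete :: "('r::comm_ring_1 \<Rightarrow> 'm::ab_group_add \<Rightarrow> 'm) \<Rightarrow> 'r set \<Rightarrow> 'm set \<Rightarrow> bool" where
  "adically_complete scale a N \<longleftrightarrow> module.subspace scale N \<and>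
     bij_betw (\<lambda>x n. (+) x ` adic_sub scale a n N) N (adic_lim scale a N)"

definition max_complete :: "('r::comm_ring_1 \<Rightarrow> 'm::ab_group_add \<Rightarrow> 'm) \<Rightarrow> 'r set \<Rightarrow> 'm set" where
  "max_complete scale a = (THE N. adically_complete scale a N \<and>
     (\<forall>N'. adically_complete scale a N' \<longrightarrow> N' \<subseteq> N))"

definition completion :: "'r::comm_ring_1 set \<Rightarrow> (nat \<Rightarrow> 'r set) set" where
  "completion a = adic_lim ((*)::'r \<Rightarrow> 'r \<Rightarrow> 'r) a UNIV"

definition comp_add :: "(nat \<Rightarrow> 'r::comm_ring_1 set) \<Rightarrow> (nat \<Rightarrow> 'r set) \<Rightarrow> (nat \<Rightarrow> 'r set)" where
  "comp_add c d = (\<lambda>n. {x + y | x y. x \<in> c n \<and> y \<in> d n})"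

definition comp_scale :: "'r::comm_ring_1 set \<Rightarrow> 'r \<Rightarrow> (nat \<Rightarrow> 'r set) \<Rightarrow> (nat \<Rightarrow> 'r set)" where
  "comp_scale a r c = (\<lambda>n. {r * x + z | x z. x \<in> c n \<and> z \<in> adic_sub (*) a n UNIV})"

definition comp_one :: "'r::comm_ring_1 set \<Rightarrow> (nat \<Rightarrow> 'r set)" where
  "comp_one a = (\<lambda>n. (+) 1 ` adic_sub (*) a n UNIV)"

text \<open>Hom_R(R^a, M), as extensional R-linear maps (value 0 off the completion).\<close>
definition hom_completion :: "('r::comm_ring_1 \<Rightarrow> 'm::ab_group_add \<Rightarrow> 'm) \<Rightarrow> 'r set \<Rightarrow> ((nat \<Rightarrow> 'r set) \<Rightarrow> 'm) set" where
  "hom_completion scale a = {\<phi>.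
     (\<forall>c\<in>completion a. \<forall>d\<in>completion a. \<phi> (comp_add c d) = \<phi> c + \<phi> d) \<and>
     (\<forall>r. \<forall>c\<in>completion a. \<phi> (comp_scale a r c) = scale r (\<phi> c)) \<and>
     (\<forall>c. c \<notin> completion a \<longrightarrow> \<phi> c = 0)}"

text \<open>The natural action of the completion on an a-adically complete submodule N:
  c . m = lim r_n m, where r_n represents c modulo a^n.\<close>
definition hat_act :: "('r::comm_ring_1 \<Rightarrow> 'm::ab_group_add \<Rightarrow> 'm) \<Rightarrow> 'r set \<Rightarrow> 'm set \<Rightarrow> (nat \<Rightarrow> 'r set) \<Rightarrow> 'm \<Rightarrow> 'm" where
  "hat_act scale a N c m = (THE y. y \<in> N \<and> (\<forall>n. \<forall>r\<in>c n. y - scale r m \<in> adic_sub scale a n N))"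

definition map_f :: "('r::comm_ring_1 \<Rightarrow> 'm::ab_group_add \<Rightarrow> 'm) \<Rightarrow> 'r set \<Rightarrow> 'm \<Rightarrow> (nat \<Rightarrow> 'r set) \<Rightarrow> 'm" where
  "map_f scale a m = (\<lambda>c. if c \<in> completion a then hat_act scale a (max_complete scale a) c m else 0)"

definition map_e :: "'r::comm_ring_1 set \<Rightarrow> ((nat \<Rightarrow> 'r set) \<Rightarrow> 'm::ab_group_add) \<Rightarrow> 'm" where
  "map_e a \<phi> = \<phi> (comp_one a)"

end

theory Submission
  imports Defs
begin


interpretation R: module "(*) :: 'r::comm_ring_1 \<Rightarrow> 'r \<Rightarrow> 'r"
  by unfold_locales (auto simp: algebra_simps)

declare R.scale_scale[simp del]

lemma is_ideal_iff: "is_ideal I \<longleftrightarrow> R.subspace I"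
  by (simp add: is_ideal_def)

lemma ideal_gen_eq: "ideal_gen S = R.span S"
  by (simp add: ideal_gen_def)

lemma ideal_gen_ideal[simp]: "is_ideal (ideal_gen S)"
  by (simp add: is_ideal_iff ideal_gen_eq)

lemma ideal_pow_ideal[simp]: "is_ideal (ideal_pow a n)"
  by (simp add: ideal_pow_def)

lemma ideal_0: "is_ideal I \<Longrightarrow> 0 \<in> I"
  by (simp add: is_ideal_iff R.subspace_0)
lemma ideal_add: "is_ideal I \<Longrightarrow> x \<in> I \<Longrightarrow> y \<in> I \<Longrightarrow> x + y \<in> I"
  by (simp add: is_ideal_iff R.subspace_add)
lemma ideal_diff: "is_ideal I \<Longrightarrow> x \<in> I \<Longrightarrow> y \<in> I \<Longrightarrow> x - y \<in> I"
  by (simp add: is_ideal_iff R.subspace_diff)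
lemma ideal_neg: "is_ideal I \<Longrightarrow> x \<in> I \<Longrightarrow> - x \<in> I"
  by (simp add: is_ideal_iff R.subspace_neg)
lemma ideal_multL: "is_ideal I \<Longrightarrow> x \<in> I \<Longrightarrow> c * x \<in> I"
  by (simp add: is_ideal_iff R.subspace_scale)
lemma ideal_multR: "is_ideal I \<Longrightarrow> x \<in> I \<Longrightarrow> x * c \<in> I"
  by (metis ideal_multL mult.commute)
lemma ideal_sum: "is_ideal I \<Longrightarrow> (\<And>x. x \<in> B \<Longrightarrow> f x \<in> I) \<Longrightarrow> sum f B \<in> I"
  by (simp add: is_ideal_iff R.subspace_sum)
lemma ideal_gen_minimal: "S \<subseteq> I \<Longrightarrow> is_ideal I \<Longrightarrow> ideal_gen S \<subseteq> I"
  by (simp add: is_ideal_iff ideal_gen_eq R.span_minimal)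
lemma ideal_gen_superset: "S \<subseteq> ideal_gen S"
  by (simp add: ideal_gen_eq R.span_superset)
lemma ideal_gen_ideal_eq: "is_ideal I \<Longrightarrow> ideal_gen I = I"
  by (simp add: is_ideal_iff ideal_gen_eq)
lemma ideal_one: "is_ideal I \<Longrightarrow> 1 \<in> I \<Longrightarrow> I = UNIV"
  by (metis UNIV_eq_I ideal_multL mult.right_neutral)

lemma ideal_pow_0[simp]: "ideal_pow a 0 = UNIV"
proof -
  have "1 \<in> ideal_pow a 0"
    unfolding ideal_pow_def by (rule set_mp[OF ideal_gen_superset]) (auto intro!: exI[of _ "[]"])
  then show ?thesis by (rule ideal_one[OF ideal_pow_ideal])
qed

lemma ideal_pow_1: "is_ideal a \<Longrightarrow> ideal_pow a 1 = a"
proof -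
  assume a: "is_ideal a"
  have e: "{prod_list xs |xs. length xs = 1 \<and> set xs \<subseteq> a} = a"
  proof (intro equalityI subsetI)
    fix y assume "y \<in> {prod_list xs |xs. length xs = 1 \<and> set xs \<subseteq> a}"
    then obtain xs where "y = prod_list xs" "length xs = 1" "set xs \<subseteq> a" by blast
    then show "y \<in> a" by (cases xs) auto
  next
    fix x assume "x \<in> a" then show "x \<in> {prod_list xs |xs. length xs = 1 \<and> set xs \<subseteq> a}"
      by (auto intro!: exI[of _ "[x]"])
  qed
  show ?thesis unfolding ideal_pow_def e using a ideal_gen_ideal_eq by blast
qed

lemma ideal_pow_Suc_sub: "is_ideal a \<Longrightarrow> ideal_pow a (Suc n) \<subseteq> ideal_pow a n"
proof -
  assume a: "is_ideal a"
  show ?thesis unfolding ideal_pow_def[of a "Suc n"]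
  proof (rule ideal_gen_minimal)
    show "{prod_list xs |xs. length xs = Suc n \<and> set xs \<subseteq> a} \<subseteq> ideal_pow a n"
    proof safe
      fix xs :: "'a list" assume "length xs = Suc n" "set xs \<subseteq> a"
      then obtain y ys where xs: "xs = y # ys" "length ys = n" "set ys \<subseteq> a" by (cases xs) auto
      have "prod_list ys \<in> ideal_pow a n" unfolding ideal_pow_def
        using xs by (intro set_mp[OF ideal_gen_superset]) auto
      then have "y * prod_list ys \<in> ideal_pow a n" by (rule ideal_multL[OF ideal_pow_ideal])
      then show "prod_list xs \<in> ideal_pow a n" using xs by simp
    qed
  qed simp
qed

lemma ideal_pow_mono: assumes "is_ideal a" "m \<le> n" shows "ideal_pow a n \<subseteq> ideal_pow a m"
  using assms(2) by (induction n rule: dec_induct) (use ideal_pow_Suc_sub[OF assms(1)] in blast)+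

lemma ideal_sub_left:
  assumes T: "is_ideal T" shows "R.subspace {y. \<forall>x\<in>S. x * y \<in> T}"
  unfolding R.subspace_def
proof (intro conjI allI ballI)
  show "0 \<in> {y. \<forall>x\<in>S. x * y \<in> T}" using ideal_0[OF T] by simp
  fix x y c assume x: "x \<in> {y. \<forall>x\<in>S. x * y \<in> T}"
  then show "c * x \<in> {y. \<forall>x\<in>S. x * y \<in> T}"
  proof (intro CollectI ballI)
    fix z assume "z \<in> S"
    then have "z * x \<in> T" using x by blast
    then have "c * (z * x) \<in> T" by (rule ideal_multL[OF T])
    then show "z * (c * x) \<in> T" by (simp add: algebra_simps)
  qed
  assume y: "y \<in> {y. \<forall>x\<in>S. x * y \<in> T}"
  show "x + y \<in> {y. \<forall>x\<in>S. x * y \<in> T}"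
  proof (intro CollectI ballI)
    fix z assume "z \<in> S"
    then have "z * x + z * y \<in> T" using x y ideal_add[OF T] by blast
    then show "z * (x + y) \<in> T" by (simp add: algebra_simps)
  qed
qed

lemma ideal_sub_right:
  assumes T: "is_ideal T" shows "R.subspace {x. x * v \<in> T}"
  unfolding R.subspace_def
proof (intro conjI allI ballI)
  show "0 \<in> {x. x * v \<in> T}" using ideal_0[OF T] by simp
  fix x y c assume x: "x \<in> {x. x * v \<in> T}"
  then show "c * x \<in> {x. x * v \<in> T}"
  proof (intro CollectI)
    have "c * (x * v) \<in> T" using x ideal_multL[OF T] by blast
    then show "c * x * v \<in> T" by (simp add: algebra_simps)
  qed
  assume y: "y \<in> {x. x * v \<in> T}"
  show "x + y \<in> {x. x * v \<in> T}"
  proof (intro CollectI)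
    have "x * v + y * v \<in> T" using x y ideal_add[OF T] by blast
    then show "(x + y) * v \<in> T" by (simp add: algebra_simps)
  qed
qed

lemma ideal_span_mult:
  assumes "x \<in> ideal_gen A" "y \<in> ideal_gen B" "is_ideal T" "\<And>u v. u \<in> A \<Longrightarrow> v \<in> B \<Longrightarrow> u * v \<in> T"
  shows "x * y \<in> T"
proof -
  have "y \<in> {y. \<forall>x\<in>ideal_gen A. x * y \<in> T}"
    using assms(2) unfolding ideal_gen_eq
  proof (rule R.span_subspace_induct)
    show "R.subspace {y. \<forall>x\<in>R.span A. x * y \<in> T}"
      using assms(3) by (rule ideal_sub_left)
    fix v assume v: "v \<in> B"
    have "x \<in> {x. x * v \<in> T}" if "x \<in> R.span A" for x
      using that
    proof (rule R.span_subspace_induct)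
      show "R.subspace {x. x * v \<in> T}"
        using assms(3) by (rule ideal_sub_right)
    qed (use assms(4) v in auto)
    then show "v \<in> {y. \<forall>x\<in>R.span A. x * y \<in> T}" by auto
  qed
  then show ?thesis using assms(1) by auto
qed

lemma ideal_pow_mult:
  assumes "x \<in> ideal_pow a m" "y \<in> ideal_pow a n"
  shows "x * y \<in> ideal_pow a (m + n)"
  using assms unfolding ideal_pow_def[of a m] ideal_pow_def[of a n]
proof (rule ideal_span_mult)
  fix u v assume "u \<in> {prod_list xs |xs. length xs = m \<and> set xs \<subseteq> a}"
    "v \<in> {prod_list xs |xs. length xs = n \<and> set xs \<subseteq> a}"
  then obtain xs ys where "u = prod_list xs" "length xs = m" "set xs \<subseteq> a"
     "v = prod_list ys" "length ys = n" "set ys \<subseteq> a" by auto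
  then show "u * v \<in> ideal_pow a (m + n)" unfolding ideal_pow_def
    by (intro set_mp[OF ideal_gen_superset]) (auto intro!: exI[of _ "xs @ ys"])
qed simp



lemma ideal_gen_finite_repr:
  assumes "finite G" "x \<in> ideal_gen G"
  shows "\<exists>u. x = (\<Sum>g\<in>G. u g * g)"
  using assms R.span_finite[of G] unfolding ideal_gen_eq by auto

lemma ideal_gen_finite_sum:
  assumes "finite G"
  shows "(\<Sum>g\<in>G. u g * g) \<in> ideal_gen G"
  unfolding ideal_gen_eq using assms
  by (intro R.span_sum R.span_scale R.span_base) auto

lemma ideal_pow_decomp:
  assumes G: "finite G" "ideal_pow a n = ideal_gen G" and z: "z \<in> ideal_pow a (n + j)"
  shows "\<exists>\<beta>. (\<forall>g. \<beta> g \<in> ideal_pow a j) \<and> z = (\<Sum>g\<in>G. g * \<beta> g)"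
proof -
  let ?T = "{z. \<exists>\<beta>. (\<forall>g. \<beta> g \<in> ideal_pow a j) \<and> z = (\<Sum>g\<in>G. g * \<beta> g)}"
  have T: "is_ideal ?T" unfolding is_ideal_iff
  proof (rule R.subspaceI)
    show "0 \<in> ?T" by (auto intro!: exI[of _ "\<lambda>_. 0"] ideal_0)
  next
    fix x y assume "x \<in> ?T" "y \<in> ?T"
    then obtain \<beta> \<gamma> where "\<forall>g. \<beta> g \<in> ideal_pow a j" "x = (\<Sum>g\<in>G. g * \<beta> g)"
      "\<forall>g. \<gamma> g \<in> ideal_pow a j" "y = (\<Sum>g\<in>G. g * \<gamma> g)" by blast
    then show "x + y \<in> ?T"
      by (intro CollectI exI[of _ "\<lambda>g. \<beta> g + \<gamma> g"])
         (auto simp: distrib_left sum.distrib intro: ideal_add)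
  next
    fix c x assume "x \<in> ?T"
    then obtain \<beta> where "\<forall>g. \<beta> g \<in> ideal_pow a j" "x = (\<Sum>g\<in>G. g * \<beta> g)" by blast
    then show "c * x \<in> ?T"
      by (intro CollectI exI[of _ "\<lambda>g. c * \<beta> g"])
         (auto simp: sum_distrib_left mult.left_commute intro: ideal_multL)
  qed
  have "ideal_pow a (n + j) \<subseteq> ?T" unfolding ideal_pow_def[of a "n+j"]
  proof (rule ideal_gen_minimal[OF _ T], rule subsetI)
    fix z assume "z \<in> {prod_list xs |xs. length xs = n + j \<and> set xs \<subseteq> a}"
    then obtain xs where xs: "z = prod_list xs" "length xs = n + j" "set xs \<subseteq> a" by blast
    have z: "z = prod_list (take n xs) * prod_list (drop n xs)"
      using xs(1) by (metis append_take_drop_id prod_list.append)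
    have "prod_list (take n xs) \<in> ideal_pow a n" unfolding ideal_pow_def
      using xs by (intro set_mp[OF ideal_gen_superset]) (auto intro!: exI[of _ "take n xs"] dest: in_set_takeD)
    then obtain u where u: "prod_list (take n xs) = (\<Sum>g\<in>G. u g * g)"
      using ideal_gen_finite_repr[OF G(1)] G(2) by auto
    have d: "prod_list (drop n xs) \<in> ideal_pow a j" unfolding ideal_pow_def
      using xs by (intro set_mp[OF ideal_gen_superset]) (auto intro!: exI[of _ "drop n xs"] dest: in_set_dropD)
    show "z \<in> ?T"
    proof (intro CollectI exI[of _ "\<lambda>g. u g * prod_list (drop n xs)"] conjI allI)
      show "u g * prod_list (drop n xs) \<in> ideal_pow a j" for g by (rule ideal_multL[OF _ d]) simp
      show "z = (\<Sum>g\<in>G. g * (u g * prod_list (drop n xs)))"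
        unfolding z u sum_distrib_right by (simp add: algebra_simps)
    qed
  qed
  then show ?thesis using z by blast
qed

lemma jacobson_unit:
  fixes x :: "'r::comm_ring_1"
  assumes "x \<in> jacobson_radical"
  shows "\<exists>u. u * (1 - x) = 1"
proof (rule ccontr)
  assume nu: "\<not> (\<exists>u. u * (1 - x) = 1)"
  let ?A = "{I::'r set. is_ideal I \<and> 1 - x \<in> I \<and> 1 \<notin> I}"
  have I0: "ideal_gen {1 - x} \<in> ?A"
  proof -
    have eq: "ideal_gen {1 - x} = range (\<lambda>k. k * (1 - x))"
      unfolding ideal_gen_eq by (rule R.span_singleton)
    have "1 - x \<in> ideal_gen {1 - x}" by (rule set_mp[OF ideal_gen_superset]) simp
    moreover have "1 \<notin> ideal_gen {1 - x}" using eq nu by auto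
    ultimately show ?thesis by simp
  qed
  have "\<exists>M\<in>?A. \<forall>X\<in>?A. M \<subseteq> X \<longrightarrow> X = M"
  proof (rule subset_Zorn_nonempty)
    show "?A \<noteq> {}" using I0 by blast
    fix C assume C: "C \<noteq> {}" "subset.chain ?A C"
    have sub: "C \<subseteq> ?A" and ch: "\<And>X Y. X \<in> C \<Longrightarrow> Y \<in> C \<Longrightarrow> X \<subseteq> Y \<or> Y \<subseteq> X"
      using C(2) unfolding subset.chain_def by auto
    show "\<Union>C \<in> ?A"
    proof (intro CollectI conjI)
      show "is_ideal (\<Union>C)" unfolding is_ideal_iff
      proof (rule R.subspaceI)
        obtain X where "X \<in> C" using C(1) by blast
        then show "0 \<in> \<Union>C" using sub ideal_0 by blast
      next
        fix y z assume "y \<in> \<Union>C" "z \<in> \<Union>C"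
        then obtain Y Z where YZ: "Y \<in> C" "Z \<in> C" "y \<in> Y" "z \<in> Z" by blast
        show "y + z \<in> \<Union>C"
        proof (cases "Y \<subseteq> Z")
          case True then show ?thesis using YZ sub ideal_add[of Z y z] by blast
        next
          case False then have "Z \<subseteq> Y" using ch YZ by blast
          then show ?thesis using YZ sub ideal_add[of Y y z] by blast
        qed
      next
        fix c y assume "y \<in> \<Union>C"
        then obtain Y where "Y \<in> C" "y \<in> Y" by blast
        then show "c * y \<in> \<Union>C" using sub ideal_multL[of Y y c] by blast
      qed
      show "1 - x \<in> \<Union>C" using C(1) sub by blast
      show "1 \<notin> \<Union>C" using sub by blast
    qed
  qed
  then obtain M where M: "M \<in> ?A" "\<And>X. X \<in> ?A \<Longrightarrow> M \<subseteq> X \<Longrightarrow> X = M" by blast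
  have "maximal_ideal M" unfolding maximal_ideal_def
  proof (intro conjI allI impI)
    show "is_ideal M" using M by blast
    show "M \<noteq> UNIV" using M by blast
    fix J assume J: "is_ideal J \<and> M \<subseteq> J"
    show "J = M \<or> J = UNIV"
    proof (cases "1 \<in> J")
      case True then show ?thesis using J ideal_one by blast
    next
      case False then have "J \<in> ?A" using J M by blast
      then show ?thesis using M J by blast
    qed
  qed
  then have "x \<in> M" using assms unfolding jacobson_radical_def by blast
  then have "(1 - x) + x \<in> M" using M ideal_add by blast
  then show False using M by simp
qed

lemma adic_sub_ring:
  assumes "is_ideal I"
  shows "R.span {r * x |r x. r \<in> I \<and> x \<in> (UNIV::'r::comm_ring_1 set)} = I"
proof -
  have "{r * x |r x. r \<in> I \<and> x \<in> (UNIV::'r set)} = I"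
  proof (intro equalityI subsetI)
    fix z assume "z \<in> {r * x |r x. r \<in> I \<and> x \<in> (UNIV::'r set)}"
    then show "z \<in> I" using ideal_multR[OF assms] by blast
  next
    fix z assume z: "z \<in> I"
    have "z = z * 1" by simp
    then show "z \<in> {r * x |r x. r \<in> I \<and> x \<in> (UNIV::'r set)}" using z by blast
  qed
  then show ?thesis using assms by (simp add: is_ideal_iff)
qed

lemma adic_sub_R: "is_ideal a \<Longrightarrow> adic_sub (*) a n UNIV = ideal_pow a n"
  unfolding adic_sub_def by (rule adic_sub_ring) simp

lemma count_list_length:
  assumes "finite G" "set xs \<subseteq> G"
  shows "length xs = (\<Sum>g\<in>G. count_list xs g)"
  using assms(2)
proof (induction xs)
  case Nil then show ?case by simp
next
  case (Cons x xs)
  have "(\<Sum>g\<in>G. count_list (x # xs) g) = (\<Sum>g\<in>G. count_list xs g + (if x = g then 1 else 0))"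
    by (intro sum.cong) auto
  also have "\<dots> = (\<Sum>g\<in>G. count_list xs g) + 1"
    using Cons.prems assms(1) by (simp add: sum.distrib)
  finally show ?case using Cons by simp
qed

lemma count_list_dvd: "g ^ count_list xs g dvd prod_list (xs :: 'r::comm_ring_1 list)"
proof (induction xs)
  case Nil then show ?case by simp
next
  case (Cons x xs) then show ?case
    by (cases "x = g") (auto simp: mult_dvd_mono intro: dvd_mult)
qed

lemma ideal_pow_monomials:
  "ideal_pow (ideal_gen G) n \<subseteq> ideal_gen {prod_list xs |xs. length xs = n \<and> set xs \<subseteq> G}"
proof -
  let ?Mon = "\<lambda>n. ideal_gen {prod_list xs |xs. length xs = n \<and> set xs \<subseteq> G}"
  have "prod_list ys \<in> ?Mon (length ys)" if "set ys \<subseteq> ideal_gen G" for ys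
    using that
  proof (induction ys)
    case Nil then show ?case by (intro set_mp[OF ideal_gen_superset]) auto
  next
    case (Cons y ys)
    have "y * prod_list ys \<in> ?Mon (Suc (length ys))"
    proof (rule ideal_span_mult[of y G "prod_list ys"])
      show "y \<in> ideal_gen G" using Cons by simp
      show "prod_list ys \<in> ideal_gen {prod_list xs |xs. length xs = length ys \<and> set xs \<subseteq> G}"
        using Cons by simp
      fix u v assume "u \<in> G" "v \<in> {prod_list xs |xs. length xs = length ys \<and> set xs \<subseteq> G}"
      then obtain xs where "v = prod_list xs" "length xs = length ys" "set xs \<subseteq> G" by blast
      then show "u * v \<in> ?Mon (Suc (length ys))" using \<open>u \<in> G\<close>
        by (intro set_mp[OF ideal_gen_superset]) (auto intro!: exI[of _ "u # xs"])
    qed simp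
    then show ?case by simp
  qed
  then show ?thesis unfolding ideal_pow_def[of _ n]
    by (intro ideal_gen_minimal) auto
qed

lemma ideal_pow_in_radical:
  assumes G: "finite G" and J: "is_ideal J" and k: "\<And>g. g \<in> G \<Longrightarrow> \<exists>k. g ^ k \<in> J"
  shows "\<exists>n. ideal_pow (ideal_gen G) n \<subseteq> J"
proof -
  obtain kf where kf: "\<And>g. g \<in> G \<Longrightarrow> g ^ kf g \<in> J" using k by metis
  define K where "K = (\<Sum>g\<in>G. kf g)"
  have gK: "g ^ K \<in> J" if "g \<in> G" for g
  proof -
    have "kf g \<le> K" unfolding K_def using G that by (intro member_le_sum) auto
    then have "g ^ K = g ^ (K - kf g) * g ^ kf g" by (simp add: power_add[symmetric])
    then show ?thesis using kf[OF that] ideal_multL[OF J] by metis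
  qed
  have "ideal_gen {prod_list xs |xs. length xs = card G * K + 1 \<and> set xs \<subseteq> G} \<subseteq> J"
  proof (rule ideal_gen_minimal[OF _ J], rule subsetI)
    fix z assume "z \<in> {prod_list xs |xs. length xs = card G * K + 1 \<and> set xs \<subseteq> G}"
    then obtain xs where xs: "z = prod_list xs" "length xs = card G * K + 1" "set xs \<subseteq> G" by blast
    have "\<exists>g\<in>G. K \<le> count_list xs g"
    proof (rule ccontr)
      assume "\<not> ?thesis"
      then have "(\<Sum>g\<in>G. count_list xs g) \<le> (\<Sum>g\<in>G. K)"
        by (intro sum_mono) auto
      then show False using count_list_length[OF G xs(3)] xs(2) by simp
    qed
    then obtain g where g: "g \<in> G" "K \<le> count_list xs g" by blast
    have "g ^ K dvd g ^ count_list xs g" using g by (simp add: le_imp_power_dvd)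
    then have "g ^ K dvd z" using count_list_dvd[of g xs] xs(1) dvd_trans by blast
    then obtain w where "z = g ^ K * w" by (auto elim: dvdE)
    then show "z \<in> J" using gK[OF g(1)] ideal_multR[OF J] by simp
  qed
  then show ?thesis using ideal_pow_monomials by blast
qed



definition splus :: "'b::ab_group_add set \<Rightarrow> 'b set \<Rightarrow> 'b set" where
  "splus A B = {x + y | x y. x \<in> A \<and> y \<in> B}"

context module
begin

lemma subspace_splus: "subspace A \<Longrightarrow> subspace B \<Longrightarrow> subspace (splus A B)"
  unfolding splus_def
proof (rule subspaceI)
  assume A: "subspace A" and B: "subspace B"
  show "0 \<in> {x + y |x y. x \<in> A \<and> y \<in> B}" using subspace_0[OF A] subspace_0[OF B] by force
  fix x y assume "x \<in> {x + y |x y. x \<in> A \<and> y \<in> B}" "y \<in> {x + y |x y. x \<in> A \<and> y \<in> B}"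
  then obtain x1 x2 y1 y2 where "x = x1 + x2" "y = y1 + y2" "x1 \<in> A" "x2 \<in> B" "y1 \<in> A" "y2 \<in> B"
    by blast
  moreover have "x + y = (x1 + y1) + (x2 + y2)" using \<open>x = x1 + x2\<close> \<open>y = y1 + y2\<close>
    by (simp add: algebra_simps)
  ultimately show "x + y \<in> {x + y |x y. x \<in> A \<and> y \<in> B}"
    using subspace_add[OF A, of x1 y1] subspace_add[OF B, of x2 y2] by blast
next
  assume A: "subspace A" and B: "subspace B"
  fix c x assume "x \<in> {x + y |x y. x \<in> A \<and> y \<in> B}"
  then obtain x1 x2 where "x = x1 + x2" "x1 \<in> A" "x2 \<in> B" by blast
  then show "c *s x \<in> {x + y |x y. x \<in> A \<and> y \<in> B}"
    using subspace_scale[OF A, of x1 c] subspace_scale[OF B, of x2 c]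
    by (auto simp: scale_right_distrib)
qed

lemma splus_mono: "A \<subseteq> A' \<Longrightarrow> B \<subseteq> B' \<Longrightarrow> splus A B \<subseteq> splus A' B'"
  unfolding splus_def by blast

lemma splus_le: "subspace C \<Longrightarrow> A \<subseteq> C \<Longrightarrow> B \<subseteq> C \<Longrightarrow> splus A B \<subseteq> C"
  unfolding splus_def using subspace_add by blast

lemma splus_left: "subspace B \<Longrightarrow> A \<subseteq> splus A B"
  unfolding splus_def using subspace_0 by force

lemma splus_right: "subspace A \<Longrightarrow> B \<subseteq> splus A B"
  unfolding splus_def using subspace_0 by force

lemma asub_eq: "adic_sub scale a n N = span {r *s x | r x. r \<in> ideal_pow a n \<and> x \<in> N}"
  by (simp add: adic_sub_def)

lemma asub_subspace[simp]: "subspace (adic_sub scale a n N)"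
  by (simp add: asub_eq)

lemma asub_mem: "r \<in> ideal_pow a n \<Longrightarrow> x \<in> N \<Longrightarrow> r *s x \<in> adic_sub scale a n N"
  unfolding asub_eq by (rule span_base) blast

lemma asub_minimal:
  "subspace T \<Longrightarrow> (\<And>r x. r \<in> ideal_pow a n \<Longrightarrow> x \<in> N \<Longrightarrow> r *s x \<in> T) \<Longrightarrow> adic_sub scale a n N \<subseteq> T"
  unfolding asub_eq by (rule span_minimal) auto

lemma asub_le: "subspace N \<Longrightarrow> adic_sub scale a n N \<subseteq> N"
  by (rule asub_minimal) (auto intro: subspace_scale)

lemma asub_monoN: "N \<subseteq> N' \<Longrightarrow> adic_sub scale a n N \<subseteq> adic_sub scale a n N'"
  unfolding asub_eq by (rule span_mono) blast

lemma asub_mono: "is_ideal a \<Longrightarrow> m \<le> n \<Longrightarrow> adic_sub scale a n N \<subseteq> adic_sub scale a m N"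
  by (rule asub_minimal) (auto intro!: asub_mem dest: ideal_pow_mono)

lemma asub_0: "subspace N \<Longrightarrow> adic_sub scale a 0 N = N"
proof
  assume N: "subspace N"
  show "adic_sub scale a 0 N \<subseteq> N" by (rule asub_le[OF N])
  show "N \<subseteq> adic_sub scale a 0 N"
  proof
    fix x assume "x \<in> N"
    then have "1 *s x \<in> adic_sub scale a 0 N" by (intro asub_mem) auto
    then show "x \<in> adic_sub scale a 0 N" by simp
  qed
qed

lemma asub_splus:
  assumes "subspace A" "subspace B"
  shows "adic_sub scale a n (splus A B) \<subseteq> splus (adic_sub scale a n A) (adic_sub scale a n B)"
proof (rule asub_minimal)
  show "subspace (splus (adic_sub scale a n A) (adic_sub scale a n B))"
    by (intro subspace_splus asub_subspace)
  fix r x assume r: "r \<in> ideal_pow a n" and x: "x \<in> splus A B"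
  then obtain y z where "x = y + z" "y \<in> A" "z \<in> B" unfolding splus_def by blast
  then show "r *s x \<in> splus (adic_sub scale a n A) (adic_sub scale a n B)"
    unfolding splus_def using r by (auto simp: scale_right_distrib intro!: asub_mem)
qed

lemma asub_scale: "z \<in> adic_sub scale a n N \<Longrightarrow> c *s z \<in> adic_sub scale a n N"
  by (rule subspace_scale[OF asub_subspace])
lemma asub_add: "y \<in> adic_sub scale a n N \<Longrightarrow> z \<in> adic_sub scale a n N \<Longrightarrow> y + z \<in> adic_sub scale a n N"
  by (rule subspace_add[OF asub_subspace])
lemma asub_diff: "y \<in> adic_sub scale a n N \<Longrightarrow> z \<in> adic_sub scale a n N \<Longrightarrow> y - z \<in> adic_sub scale a n N"
  by (rule subspace_diff[OF asub_subspace])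
lemma asub_neg: "y \<in> adic_sub scale a n N \<Longrightarrow> - y \<in> adic_sub scale a n N"
  by (rule subspace_neg[OF asub_subspace])
lemma asub_zero: "0 \<in> adic_sub scale a n N"
  by (rule subspace_0[OF asub_subspace])

lemma noeth_sub:
  assumes noeth: "noetherian_ring TYPE('a)" and S: "finite S"
  shows "subspace N \<Longrightarrow> N \<subseteq> span S \<Longrightarrow> \<exists>T. finite T \<and> N = span T"
  using S
proof (induction S arbitrary: N rule: finite_induct)
  case empty
  then have "N = {0}" using subspace_0 by auto
  then show ?case by (intro exI[of _ "{}"]) auto
next
  case (insert s S)
  let ?I = "{r. \<exists>y\<in>span S. r *s s + y \<in> N}"
  have I: "is_ideal ?I" unfolding is_ideal_iff
  proof (rule R.subspaceI)
    show "0 \<in> ?I" using subspace_0[OF insert.prems(1)] span_zero by force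
  next
    fix x y assume "x \<in> ?I" "y \<in> ?I"
    then obtain y1 y2 where "y1 \<in> span S" "x *s s + y1 \<in> N" "y2 \<in> span S" "y \<in> ?I" "y *s s + y2 \<in> N" by blast
    then have "(x + y) *s s + (y1 + y2) \<in> N" "y1 + y2 \<in> span S"
      using subspace_add[OF insert.prems(1), of "x *s s + y1" "y *s s + y2"] span_add
      by (auto simp: algebra_simps)
    then show "x + y \<in> ?I" by blast
  next
    fix c x assume "x \<in> ?I"
    then obtain y where "y \<in> span S" "x *s s + y \<in> N" by blast
    then have "(c * x) *s s + c *s y \<in> N" "c *s y \<in> span S"
      using subspace_scale[OF insert.prems(1), of "x *s s + y" c] span_scale
      by (auto simp: algebra_simps)
    then show "c * x \<in> ?I" by blast
  qed
  obtain G where G: "finite G" "?I = ideal_gen G"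
    using noeth I unfolding noetherian_ring_def by blast
  have "\<forall>g\<in>G. \<exists>y. y \<in> span S \<and> g *s s + y \<in> N"
    using G ideal_gen_superset by blast
  then obtain yf where yf: "\<And>g. g \<in> G \<Longrightarrow> yf g \<in> span S \<and> g *s s + yf g \<in> N" by metis
  have N': "subspace (N \<inter> span S)" by (intro subspace_inter insert.prems subspace_span)
  obtain T' where T': "finite T'" "N \<inter> span S = span T'" using insert.IH[OF N'] by blast
  define W where "W = (\<lambda>g. g *s s + yf g) ` G"
  have "N = span (T' \<union> W)"
  proof
    show "span (T' \<union> W) \<subseteq> N"
    proof (rule span_minimal[OF _ insert.prems(1)])
      show "T' \<union> W \<subseteq> N" using T' span_superset[of T'] yf unfolding W_def by blast
    qed
    show "N \<subseteq> span (T' \<union> W)"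
    proof
      fix n assume n: "n \<in> N"
      then obtain k where k: "n - k *s s \<in> span S"
        using insert.prems(2) span_breakdown_eq by blast
      have "k \<in> ?I" using k n by (intro CollectI bexI[of _ "n - k *s s"]) auto
      then obtain u where u: "k = (\<Sum>g\<in>G. u g * g)" using G ideal_gen_finite_repr by blast
      define w where "w = (\<Sum>g\<in>G. u g *s (g *s s + yf g))"
      have w1: "w \<in> span (T' \<union> W)" unfolding w_def W_def
        by (intro span_sum span_scale span_base) auto
      have w2: "w \<in> N" unfolding w_def using yf insert.prems(1)
        by (intro subspace_sum subspace_scale) auto
      have "w = k *s s + (\<Sum>g\<in>G. u g *s yf g)"
        unfolding w_def u scale_sum_left by (simp add: scale_right_distrib sum.distrib)
      then have eq: "n - w = (n - k *s s) - (\<Sum>g\<in>G. u g *s yf g)" by (simp add: algebra_simps)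
      have sm: "(\<Sum>g\<in>G. u g *s yf g) \<in> span S" using yf by (intro span_sum span_scale) auto
      have "n - w \<in> span S" by (subst eq) (rule span_diff[OF k sm])
      moreover have "n - w \<in> N" using n w2 subspace_diff[OF insert.prems(1)] by blast
      ultimately have "n - w \<in> span (T' \<union> W)" using T' span_mono[of T' "T' \<union> W"] by blast
      then have "(n - w) + w \<in> span (T' \<union> W)" using w1 span_add by blast
      then show "n \<in> span (T' \<union> W)" by simp
    qed
  qed
  then show ?case using T' G unfolding W_def by blast
qed

lemma asub1_repr:
  assumes a: "is_ideal a" and S: "finite S" and z: "z \<in> adic_sub scale a 1 (span S)"
  shows "\<exists>\<alpha>. (\<forall>t. \<alpha> t \<in> a) \<and> z = (\<Sum>t\<in>S. \<alpha> t *s t)"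
proof -
  let ?T = "{z. \<exists>\<alpha>. (\<forall>t. \<alpha> t \<in> a) \<and> z = (\<Sum>t\<in>S. \<alpha> t *s t)}"
  have T: "subspace ?T"
  proof (rule subspaceI)
    show "0 \<in> ?T" using ideal_0[OF a] by (auto intro!: exI[of _ "\<lambda>_. 0"])
  next
    fix x y assume "x \<in> ?T" "y \<in> ?T"
    then obtain \<alpha> \<beta> where "\<forall>t. \<alpha> t \<in> a" "x = (\<Sum>t\<in>S. \<alpha> t *s t)"
      "\<forall>t. \<beta> t \<in> a" "y = (\<Sum>t\<in>S. \<beta> t *s t)" by blast
    then show "x + y \<in> ?T"
      by (intro CollectI exI[of _ "\<lambda>t. \<alpha> t + \<beta> t"])
         (auto simp: scale_left_distrib sum.distrib intro: ideal_add[OF a])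
  next
    fix c x assume "x \<in> ?T"
    then obtain \<alpha> where "\<forall>t. \<alpha> t \<in> a" "x = (\<Sum>t\<in>S. \<alpha> t *s t)" by blast
    then show "c *s x \<in> ?T"
      by (intro CollectI exI[of _ "\<lambda>t. c * \<alpha> t"])
         (auto simp: scale_sum_right intro: ideal_multL[OF a])
  qed
  have "adic_sub scale a 1 (span S) \<subseteq> ?T"
  proof (rule asub_minimal[OF T])
    fix r x assume r: "r \<in> ideal_pow a 1" and x: "x \<in> span S"
    then have r': "r \<in> a" using ideal_pow_1[OF a] by simp
    obtain u where "x = (\<Sum>t\<in>S. u t *s t)" using x span_finite[OF S] by auto
    then show "r *s x \<in> ?T" using r'
      by (intro CollectI exI[of _ "\<lambda>t. r * u t"])
         (auto simp: scale_sum_right intro: ideal_multR[OF a])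
  qed
  then show ?thesis using z by blast
qed

lemma nakayama:
  assumes a: "is_ideal a" "a \<subseteq> jacobson_radical" and S: "finite S"
  shows "subspace P \<Longrightarrow> span S \<subseteq> splus P (adic_sub scale a 1 (span S)) \<Longrightarrow> span S \<subseteq> P"
  using S
proof (induction S arbitrary: P rule: finite_induct)
  case empty
  then show ?case using subspace_0 by auto
next
  case (insert s S)
  have Psub: "subspace P" by fact
  define P' where "P' = {p + k *s s | p k. p \<in> P}"
  have P'sub: "subspace P'" unfolding P'_def
  proof (rule subspaceI)
    have "0 = 0 + 0 *s s" by simp
    then show "0 \<in> {p + k *s s |p k. p \<in> P}" using subspace_0[OF Psub] by blast
  next
    fix x y assume "x \<in> {p + k *s s |p k. p \<in> P}" "y \<in> {p + k *s s |p k. p \<in> P}"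
    then obtain p1 k1 p2 k2 where e: "x = p1 + k1 *s s" "y = p2 + k2 *s s" and "p1 \<in> P" "p2 \<in> P" by blast
    then have "p1 + p2 \<in> P" using subspace_add[OF Psub] by blast
    moreover have "x + y = (p1 + p2) + (k1 + k2) *s s" using e by (simp add: algebra_simps)
    ultimately show "x + y \<in> {p + k *s s |p k. p \<in> P}" by blast
  next
    fix c x assume "x \<in> {p + k *s s |p k. p \<in> P}"
    then obtain p k where e: "x = p + k *s s" and "p \<in> P" by blast
    then have "c *s p \<in> P" using subspace_scale[OF Psub] by blast
    moreover have "c *s x = c *s p + (c * k) *s s" using e by (simp add: algebra_simps)
    ultimately show "c *s x \<in> {p + k *s s |p k. p \<in> P}" by blast
  qed
  have decomp: "\<exists>p\<in>P. \<exists>\<alpha>. (\<forall>t. \<alpha> t \<in> a) \<and> v = p + \<alpha> s *s s + (\<Sum>t\<in>S. \<alpha> t *s t)"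
    if v: "v \<in> span (insert s S)" for v
  proof -
    obtain p z where pz: "v = p + z" "p \<in> P" "z \<in> adic_sub scale a 1 (span (insert s S))"
      using insert.prems(2) v unfolding splus_def by blast
    obtain \<alpha> where \<alpha>: "\<forall>t. \<alpha> t \<in> a" "z = (\<Sum>t\<in>insert s S. \<alpha> t *s t)"
      using asub1_repr[OF a(1) _ pz(3)] insert.hyps by blast
    have "z = \<alpha> s *s s + (\<Sum>t\<in>S. \<alpha> t *s t)" using \<alpha>(2) insert.hyps by simp
    then have "v = p + \<alpha> s *s s + (\<Sum>t\<in>S. \<alpha> t *s t)" using pz(1) by (simp add: add.assoc)
    then show ?thesis using pz(2) \<alpha>(1) by blast
  qed
  have "span S \<subseteq> splus P' (adic_sub scale a 1 (span S))"
  proof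
    fix v assume "v \<in> span S"
    then have "v \<in> span (insert s S)" using span_mono[of S "insert s S"] by blast
    then obtain p \<alpha> where p: "p \<in> P" "\<forall>t. \<alpha> t \<in> a" "v = p + \<alpha> s *s s + (\<Sum>t\<in>S. \<alpha> t *s t)"
      using decomp by blast
    have "p + \<alpha> s *s s \<in> P'" unfolding P'_def using p by blast
    moreover have "(\<Sum>t\<in>S. \<alpha> t *s t) \<in> adic_sub scale a 1 (span S)"
    proof (rule subspace_sum[OF asub_subspace])
      fix t assume "t \<in> S"
      then show "\<alpha> t *s t \<in> adic_sub scale a 1 (span S)"
        using p(2) ideal_pow_1[OF a(1)] by (intro asub_mem span_base) auto
    qed
    ultimately show "v \<in> splus P' (adic_sub scale a 1 (span S))"
      unfolding splus_def using p(3) by blast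
  qed
  then have SP': "span S \<subseteq> P'" using insert.IH[OF P'sub] by blast
  define Q where "Q = {p + \<beta> *s s | p \<beta>. p \<in> P \<and> \<beta> \<in> a}"
  have Qsub: "subspace Q" unfolding Q_def
  proof (rule subspaceI)
    have "0 = 0 + 0 *s s" by simp
    then show "0 \<in> {p + \<beta> *s s | p \<beta>. p \<in> P \<and> \<beta> \<in> a}"
      using subspace_0[OF Psub] ideal_0[OF a(1)] by blast
  next
    fix x y assume "x \<in> {p + \<beta> *s s | p \<beta>. p \<in> P \<and> \<beta> \<in> a}" "y \<in> {p + \<beta> *s s | p \<beta>. p \<in> P \<and> \<beta> \<in> a}"
    then obtain p1 k1 p2 k2 where e: "x = p1 + k1 *s s" "y = p2 + k2 *s s" and
      m: "p1 \<in> P" "p2 \<in> P" "k1 \<in> a" "k2 \<in> a" by blast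
    then have "p1 + p2 \<in> P" "k1 + k2 \<in> a" using subspace_add[OF Psub] ideal_add[OF a(1)] by blast+
    moreover have "x + y = (p1 + p2) + (k1 + k2) *s s" using e by (simp add: algebra_simps)
    ultimately show "x + y \<in> {p + \<beta> *s s | p \<beta>. p \<in> P \<and> \<beta> \<in> a}" by blast
  next
    fix c x assume "x \<in> {p + \<beta> *s s | p \<beta>. p \<in> P \<and> \<beta> \<in> a}"
    then obtain p k where e: "x = p + k *s s" and m: "p \<in> P" "k \<in> a" by blast
    then have "c *s p \<in> P" "c * k \<in> a" using subspace_scale[OF Psub] ideal_multL[OF a(1)] by blast+
    moreover have "c *s x = c *s p + (c * k) *s s" using e by (simp add: algebra_simps)
    ultimately show "c *s x \<in> {p + \<beta> *s s | p \<beta>. p \<in> P \<and> \<beta> \<in> a}" by blast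
  qed
  obtain p \<alpha> where p: "p \<in> P" "\<forall>t. \<alpha> t \<in> a" "s = p + \<alpha> s *s s + (\<Sum>t\<in>S. \<alpha> t *s t)"
    using decomp[of s] span_base[of s "insert s S"] by blast
  have "(\<Sum>t\<in>S. \<alpha> t *s t) \<in> Q"
  proof (rule subspace_sum[OF Qsub])
    fix t assume "t \<in> S"
    then have "t \<in> P'" using SP' span_base by blast
    then obtain q k where e: "t = q + k *s s" and "q \<in> P" unfolding P'_def by blast
    then have "\<alpha> t *s q \<in> P" "\<alpha> t * k \<in> a" using p(2) subspace_scale[OF Psub] ideal_multR[OF a(1)] by blast+
    moreover have "\<alpha> t *s t = \<alpha> t *s q + (\<alpha> t * k) *s s" using e by (simp add: algebra_simps)
    ultimately show "\<alpha> t *s t \<in> Q" unfolding Q_def by blast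
  qed
  moreover have "p + \<alpha> s *s s \<in> Q" unfolding Q_def using p by blast
  ultimately have "(p + \<alpha> s *s s) + (\<Sum>t\<in>S. \<alpha> t *s t) \<in> Q" using subspace_add[OF Qsub] by blast
  then have "s \<in> Q" using p(3) by simp
  then obtain q \<beta> where q: "s = q + \<beta> *s s" "q \<in> P" "\<beta> \<in> a" unfolding Q_def by blast
  obtain u where u: "u * (1 - \<beta>) = 1" using jacobson_unit q(3) a(2) by blast
  have "(1 - \<beta>) *s s = q" using q(1) by (simp add: algebra_simps)
  then have "u *s ((1 - \<beta>) *s s) = u *s q" by simp
  then have "s = u *s q" using u by simp
  then have sP: "s \<in> P" using subspace_scale[OF Psub q(2)] by simp
  have "P' \<subseteq> P"
  proof
    fix x assume "x \<in> P'"
    then obtain p k where "x = p + k *s s" "p \<in> P" unfolding P'_def by blast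
    then show "x \<in> P" using sP subspace_add[OF Psub] subspace_scale[OF Psub] by simp
  qed
  then have "insert s S \<subseteq> P" using SP' sP span_superset by blast
  then show ?case using span_minimal[OF _ Psub] by blast
qed

end



locale ctx = module scale for scale :: "'a::comm_ring_1 \<Rightarrow> 'b::ab_group_add \<Rightarrow> 'b" (infixr \<open>*s\<close> 75) +
  fixes a :: "'a set"
  assumes noeth: "noetherian_ring TYPE('a)" and aI: "is_ideal a"
    and jac: "a \<subseteq> jacobson_radical" and fg: "fin_gen_module scale"
begin

lemma fgsub: "subspace N \<Longrightarrow> \<exists>T. finite T \<and> N = span T"
proof -
  assume N: "subspace N"
  obtain S where S: "finite S" "span S = UNIV" using fg unfolding fin_gen_module_def by blast
  show ?thesis using noeth_sub[OF noeth S(1) N] S(2) by blast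
qed

lemma Krull_step:
  assumes N: "subspace N" and K: "K = {x. \<forall>n. x \<in> adic_sub scale a n N}"
    and L: "subspace L" "L \<subseteq> N" "L \<inter> K = adic_sub scale a 1 K"
    and Lmax: "\<And>L'. subspace L' \<Longrightarrow> L' \<subseteq> N \<Longrightarrow> L' \<inter> K = adic_sub scale a 1 K \<Longrightarrow> L \<subseteq> L' \<Longrightarrow> L' = L"
    and x: "x \<in> a"
  shows "\<exists>k. \<forall>y\<in>N. x ^ k *s y \<in> L"
proof -
  define C where "C k = {y \<in> N. x ^ k *s y \<in> L}" for k
  have Csub: "subspace (C k)" for k unfolding C_def
  proof (rule subspaceI)
    show "0 \<in> {y \<in> N. x ^ k *s y \<in> L}" using subspace_0[OF N] subspace_0[OF L(1)] by simp
  next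
    fix y z assume "y \<in> {y \<in> N. x ^ k *s y \<in> L}" "z \<in> {y \<in> N. x ^ k *s y \<in> L}"
    then show "y + z \<in> {y \<in> N. x ^ k *s y \<in> L}"
      using subspace_add[OF N] subspace_add[OF L(1)] by (simp add: scale_right_distrib)
  next
    fix c y assume y: "y \<in> {y \<in> N. x ^ k *s y \<in> L}"
    have eq: "x ^ k *s (c *s y) = c *s (x ^ k *s y)" by (rule scale_left_commute)
    have "c *s (x ^ k *s y) \<in> L" using y subspace_scale[OF L(1)] by blast
    then have "x ^ k *s (c *s y) \<in> L" by (simp only: eq)
    then show "c *s y \<in> {y \<in> N. x ^ k *s y \<in> L}"
      using y subspace_scale[OF N] by blast
  qed
  have Cstep: "C k \<subseteq> C (Suc k)" for k
  proof
    fix y assume "y \<in> C k"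
    then have yN: "y \<in> N" and "x ^ k *s y \<in> L" by (auto simp: C_def)
    then have "x *s (x ^ k *s y) \<in> L" using subspace_scale[OF L(1)] by blast
    then have "(x * x ^ k) *s y \<in> L" by simp
    then show "y \<in> C (Suc k)" by (simp add: C_def yN)
  qed
  have Cmono: "k \<le> l \<Longrightarrow> C k \<subseteq> C l" for k l
    using lift_Suc_mono_le[of C, OF Cstep] by blast
  define U where "U = (\<Union>k. C k)"
  have Usub: "subspace U" unfolding U_def
  proof (rule subspaceI)
    show "0 \<in> (\<Union>k. C k)" using subspace_0[OF Csub] by blast
  next
    fix y z assume "y \<in> (\<Union>k. C k)" "z \<in> (\<Union>k. C k)"
    then obtain i j where "y \<in> C i" "z \<in> C j" by blast
    then have "y \<in> C (max i j)" "z \<in> C (max i j)" using Cmono[of i "max i j"] Cmono[of j "max i j"] by auto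
    then show "y + z \<in> (\<Union>k. C k)" using subspace_add[OF Csub] by blast
  next
    fix c y assume "y \<in> (\<Union>k. C k)"
    then show "c *s y \<in> (\<Union>k. C k)" using subspace_scale[OF Csub] by blast
  qed
  obtain T where T: "finite T" "U = span T" using fgsub[OF Usub] by blast
  have "\<forall>t\<in>T. \<exists>k. t \<in> C k" using T span_superset unfolding U_def by blast
  then obtain kt where kt: "\<And>t. t \<in> T \<Longrightarrow> t \<in> C (kt t)" by metis
  define k0 where "k0 = (\<Sum>t\<in>T. kt t)"
  have "T \<subseteq> C k0"
  proof
    fix t assume t: "t \<in> T"
    have "kt t \<le> k0" unfolding k0_def using T(1) t by (intro member_le_sum) auto
    then show "t \<in> C k0" using Cmono kt[OF t] by blast
  qed
  then have "U \<subseteq> C k0" using T span_minimal[OF _ Csub] by blast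
  then have Cst: "C (Suc k0) \<subseteq> C k0" unfolding U_def by blast
  define L' where "L' = {x ^ k0 *s n + l | n l. n \<in> N \<and> l \<in> L}"
  have L'sub: "subspace L'" unfolding L'_def
  proof (rule subspaceI)
    have "0 = x ^ k0 *s 0 + 0" by simp
    then show "0 \<in> {x ^ k0 *s n + l | n l. n \<in> N \<and> l \<in> L}"
      using subspace_0[OF N] subspace_0[OF L(1)] by blast
  next
    fix y z assume "y \<in> {x ^ k0 *s n + l | n l. n \<in> N \<and> l \<in> L}" "z \<in> {x ^ k0 *s n + l | n l. n \<in> N \<and> l \<in> L}"
    then obtain n1 l1 n2 l2 where e: "y = x ^ k0 *s n1 + l1" "z = x ^ k0 *s n2 + l2"
      and m: "n1 \<in> N" "l1 \<in> L" "n2 \<in> N" "l2 \<in> L" by blast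
    have "n1 + n2 \<in> N" "l1 + l2 \<in> L" using m subspace_add[OF N] subspace_add[OF L(1)] by blast+
    moreover have "y + z = x ^ k0 *s (n1 + n2) + (l1 + l2)" using e by (simp add: algebra_simps)
    ultimately show "y + z \<in> {x ^ k0 *s n + l | n l. n \<in> N \<and> l \<in> L}" by blast
  next
    fix c y assume "y \<in> {x ^ k0 *s n + l | n l. n \<in> N \<and> l \<in> L}"
    then obtain n l where e: "y = x ^ k0 *s n + l" and m: "n \<in> N" "l \<in> L" by blast
    have "c *s n \<in> N" "c *s l \<in> L" using m subspace_scale[OF N] subspace_scale[OF L(1)] by blast+
    moreover have "c *s y = x ^ k0 *s (c *s n) + c *s l" using e by (simp add: algebra_simps scale_left_commute)
    ultimately show "c *s y \<in> {x ^ k0 *s n + l | n l. n \<in> N \<and> l \<in> L}" by blast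
  qed
  have LL': "L \<subseteq> L'"
  proof
    fix l assume "l \<in> L"
    moreover have "l = x ^ k0 *s 0 + l" by simp
    ultimately show "l \<in> L'" unfolding L'_def using subspace_0[OF N] by blast
  qed
  have L'N: "L' \<subseteq> N"
  proof
    fix y assume "y \<in> L'"
    then obtain n l where "y = x ^ k0 *s n + l" "n \<in> N" "l \<in> L" unfolding L'_def by blast
    then show "y \<in> N" using L(2) subspace_add[OF N] subspace_scale[OF N] by blast
  qed
  have "L' \<inter> K = adic_sub scale a 1 K"
  proof
    show "adic_sub scale a 1 K \<subseteq> L' \<inter> K" using L(3) LL' by blast
    show "L' \<inter> K \<subseteq> adic_sub scale a 1 K"
    proof
      fix y assume y: "y \<in> L' \<inter> K"
      then obtain n l where e: "y = x ^ k0 *s n + l" and m: "n \<in> N" "l \<in> L" unfolding L'_def by blast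
      have "x \<in> ideal_pow a 1" using x ideal_pow_1[OF aI] by simp
      then have "x *s y \<in> adic_sub scale a 1 K" using y by (intro asub_mem) auto
      then have xyL: "x *s y \<in> L" using L(3) by blast
      have "x ^ Suc k0 *s n = x *s y - x *s l" using e by (simp add: algebra_simps)
      then have "x ^ Suc k0 *s n \<in> L" using xyL m subspace_diff[OF L(1)] subspace_scale[OF L(1)] by simp
      then have "n \<in> C (Suc k0)" unfolding C_def using m by simp
      then have "n \<in> C k0" using Cst by blast
      then have "y \<in> L" using e m subspace_add[OF L(1)] unfolding C_def by simp
      then show "y \<in> adic_sub scale a 1 K" using y L(3) by blast
    qed
  qed
  then have "L' = L" using Lmax[OF L'sub L'N _ LL'] by blast
  then show ?thesis
  proof (intro exI[of _ k0] ballI)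
    fix y assume "y \<in> N"
    moreover have "x ^ k0 *s y = x ^ k0 *s y + 0" by simp
    ultimately have "x ^ k0 *s y \<in> L'" unfolding L'_def using subspace_0[OF L(1)] by blast
    then show "x ^ k0 *s y \<in> L" using \<open>L' = L\<close> by simp
  qed
qed

theorem Krull:
  assumes N: "subspace N" and x: "\<And>n. x \<in> adic_sub scale a n N"
  shows "x = 0"
proof -
  define K where "K = {x. \<forall>n. x \<in> adic_sub scale a n N}"
  have Ksub: "subspace K" unfolding K_def
    by (rule subspaceI) (auto intro: asub_zero asub_add asub_scale)
  have KN: "K \<subseteq> N" unfolding K_def using asub_0[OF N] by blast
  define aK where "aK = adic_sub scale a 1 K"
  have aKK: "aK \<subseteq> K" unfolding aK_def by (rule asub_le[OF Ksub])
  define A where "A = {L. subspace L \<and> L \<subseteq> N \<and> L \<inter> K = aK}"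
  have "\<exists>M\<in>A. \<forall>X\<in>A. M \<subseteq> X \<longrightarrow> X = M"
  proof (rule subset_Zorn_nonempty)
    have "aK \<in> A" unfolding A_def using aKK KN by (auto simp: aK_def)
    then show "A \<noteq> {}" by blast
    fix Ch assume Ch: "Ch \<noteq> {}" "subset.chain A Ch"
    have sub: "Ch \<subseteq> A" and ch: "\<And>X Y. X \<in> Ch \<Longrightarrow> Y \<in> Ch \<Longrightarrow> X \<subseteq> Y \<or> Y \<subseteq> X"
      using Ch(2) unfolding subset.chain_def by auto
    have "subspace (\<Union>Ch)"
    proof (rule subspaceI)
      obtain X where "X \<in> Ch" using Ch(1) by blast
      then show "0 \<in> \<Union>Ch" using sub subspace_0 unfolding A_def by blast
    next
      fix y z assume "y \<in> \<Union>Ch" "z \<in> \<Union>Ch"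
      then obtain Y Z where YZ: "Y \<in> Ch" "Z \<in> Ch" "y \<in> Y" "z \<in> Z" by blast
      have sY: "subspace Y" "subspace Z" using YZ sub unfolding A_def by auto
      show "y + z \<in> \<Union>Ch"
      proof (cases "Y \<subseteq> Z")
        case True then show ?thesis using YZ subspace_add[OF sY(2), of y z] by blast
      next
        case False then have "Z \<subseteq> Y" using ch YZ by blast
        then show ?thesis using YZ subspace_add[OF sY(1), of y z] by blast
      qed
    next
      fix c y assume "y \<in> \<Union>Ch"
      then obtain Y where "Y \<in> Ch" "y \<in> Y" by blast
      moreover then have "subspace Y" using sub unfolding A_def by auto
      ultimately show "c *s y \<in> \<Union>Ch" using subspace_scale by blast
    qed
    moreover have "\<Union>Ch \<subseteq> N" using sub unfolding A_def by blast
    moreover have "\<Union>Ch \<inter> K = aK"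
    proof
      show "\<Union>Ch \<inter> K \<subseteq> aK" using sub unfolding A_def by blast
      obtain X where "X \<in> Ch" using Ch(1) by blast
      then show "aK \<subseteq> \<Union>Ch \<inter> K" using sub unfolding A_def by blast
    qed
    ultimately show "\<Union>Ch \<in> A" unfolding A_def by blast
  qed
  then obtain L where L: "L \<in> A" "\<And>X. X \<in> A \<Longrightarrow> L \<subseteq> X \<Longrightarrow> X = L" by blast
  have Lp: "subspace L" "L \<subseteq> N" "L \<inter> K = adic_sub scale a 1 K" using L(1) unfolding A_def aK_def by auto
  have pow: "\<exists>k. \<forall>y\<in>N. g ^ k *s y \<in> L" if "g \<in> a" for g
    by (rule Krull_step[OF N K_def Lp _ that]) (use L(2) in \<open>auto simp: A_def aK_def\<close>)
  obtain G where G: "finite G" "a = ideal_gen G" using noeth aI unfolding noetherian_ring_def by blast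
  define J where "J = {r. \<forall>y\<in>N. r *s y \<in> L}"
  have J: "is_ideal J" unfolding is_ideal_iff J_def
  proof (rule R.subspaceI)
    show "0 \<in> {r. \<forall>y\<in>N. r *s y \<in> L}" using subspace_0[OF Lp(1)] by simp
  next
    fix r s assume "r \<in> {r. \<forall>y\<in>N. r *s y \<in> L}" "s \<in> {r. \<forall>y\<in>N. r *s y \<in> L}"
    then show "r + s \<in> {r. \<forall>y\<in>N. r *s y \<in> L}"
      using subspace_add[OF Lp(1)] by (simp add: scale_left_distrib)
  next
    fix c r assume "r \<in> {r. \<forall>y\<in>N. r *s y \<in> L}"
    then show "c * r \<in> {r. \<forall>y\<in>N. r *s y \<in> L}"
      using subspace_scale[OF Lp(1)] by (simp flip: scale_scale)
  qed
  have "\<exists>k. g ^ k \<in> J" if "g \<in> G" for g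
  proof -
    have "g \<in> a" using that G ideal_gen_superset by blast
    then show ?thesis using pow unfolding J_def by blast
  qed
  then obtain n where n: "ideal_pow a n \<subseteq> J" using ideal_pow_in_radical[OF G(1) J] G(2) by blast
  have "adic_sub scale a n N \<subseteq> L"
    by (rule asub_minimal[OF Lp(1)]) (use n in \<open>auto simp: J_def\<close>)
  then have "K \<subseteq> L" unfolding K_def by blast
  then have KaK: "K \<subseteq> adic_sub scale a 1 K" using Lp(3) by blast
  obtain T where T: "finite T" "K = span T" using fgsub[OF Ksub] by blast
  have "span T \<subseteq> splus {0} (adic_sub scale a 1 (span T))"
  proof -
    have "adic_sub scale a 1 K \<subseteq> splus {0} (adic_sub scale a 1 K)" by (rule splus_right) simp
    then show ?thesis using KaK T by blast
  qed
  then have "span T \<subseteq> {0}" using nakayama[OF aI jac T(1)] by simp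
  moreover have "x \<in> K" unfolding K_def using x by blast
  ultimately show ?thesis using T by blast
qed

end



context module
begin

lemma coset_mem: "subspace A \<Longrightarrow> z \<in> (+) x ` A \<longleftrightarrow> z - x \<in> A"
proof
  assume A: "subspace A"
  show "z \<in> (+) x ` A \<Longrightarrow> z - x \<in> A" by auto
  assume "z - x \<in> A"
  moreover have "z = x + (z - x)" by simp
  ultimately show "z \<in> (+) x ` A" by blast
qed

lemma coset_eq: "subspace A \<Longrightarrow> x - y \<in> A \<Longrightarrow> (+) x ` A = (+) y ` A"
proof -
  assume A: "subspace A" and xy: "x - y \<in> A"
  have "z - x \<in> A \<longleftrightarrow> z - y \<in> A" for z
  proof
    assume "z - x \<in> A"
    then have "(z - x) + (x - y) \<in> A" using xy subspace_add[OF A] by blast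
    then show "z - y \<in> A" by simp
  next
    assume "z - y \<in> A"
    then have "(z - y) - (x - y) \<in> A" using xy subspace_diff[OF A] by blast
    then show "z - x \<in> A" by simp
  qed
  then show ?thesis using coset_mem[OF A] by blast
qed

lemma coset_self: "subspace A \<Longrightarrow> x \<in> (+) x ` A"
  using coset_mem subspace_0 by simp

end

context ctx
begin

abbreviation AS where "AS n N \<equiv> adic_sub scale a n N"

lemma complete_iff:
  "adically_complete scale a N \<longleftrightarrow> subspace N \<and>
     (\<forall>c\<in>adic_lim scale a N. \<exists>x\<in>N. \<forall>n. c n = (+) x ` AS n N)"
proof (cases "subspace N")
  case N: True
  let ?f = "\<lambda>x n. (+) x ` AS n N"
  have inj: "inj_on ?f N"
  proof (rule inj_onI)
    fix x y assume "x \<in> N" "y \<in> N" "?f x = ?f y"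
    then have "x - y \<in> AS n N" for n
      using coset_self[of "AS n N" x] coset_mem[of "AS n N" x y] by (metis asub_subspace)
    then show "x = y" using Krull[OF N, of "x - y"] by simp
  qed
  have img: "?f ` N \<subseteq> adic_lim scale a N"
  proof
    fix c assume "c \<in> ?f ` N"
    then obtain x where x: "x \<in> N" "c = ?f x" by blast
    have "c (Suc n) \<subseteq> c n" for n
      using x asub_mono[OF aI, of n "Suc n" N] by auto
    then show "c \<in> adic_lim scale a N" unfolding adic_lim_def using x by blast
  qed
  have "bij_betw ?f N (adic_lim scale a N) \<longleftrightarrow> adic_lim scale a N \<subseteq> ?f ` N"
    using inj img unfolding bij_betw_def by blast
  also have "\<dots> \<longleftrightarrow> (\<forall>c\<in>adic_lim scale a N. \<exists>x\<in>N. \<forall>n. c n = (+) x ` AS n N)"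
    by (auto simp: image_def fun_eq_iff)
  finally show ?thesis using N unfolding adically_complete_def by blast
next
  case False then show ?thesis unfolding adically_complete_def by blast
qed

lemma complete_subspace: "adically_complete scale a N \<Longrightarrow> subspace N"
  by (simp add: adically_complete_def)

lemma complete_seq:
  assumes C: "adically_complete scale a N" and y: "\<And>n. y n \<in> N"
    and d: "\<And>n. y (Suc n) - y n \<in> AS n N"
  shows "\<exists>x\<in>N. \<forall>n. x - y n \<in> AS n N"
proof -
  define c where "c n = (+) (y n) ` AS n N" for n
  have "c (Suc n) \<subseteq> c n" for n
  proof
    fix z assume "z \<in> c (Suc n)"
    then have "z - y (Suc n) \<in> AS n N" unfolding c_def
      using asub_mono[OF aI, of n "Suc n" N] by auto
    then have "(z - y (Suc n)) + (y (Suc n) - y n) \<in> AS n N" using d asub_add by blast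
    then show "z \<in> c n" unfolding c_def using coset_mem[OF asub_subspace] by simp
  qed
  then have "c \<in> adic_lim scale a N" unfolding adic_lim_def c_def using y by blast
  then obtain x where x: "x \<in> N" "\<And>n. c n = (+) x ` AS n N" using C unfolding complete_iff by blast
  have "x - y n \<in> AS n N" for n
  proof -
    have "x \<in> (+) x ` AS n N" by (rule coset_self) simp
    then have "x \<in> (+) (y n) ` AS n N" using x(2)[of n] unfolding c_def by simp
    then show ?thesis by (simp add: coset_mem)
  qed
  then show ?thesis using x by blast
qed

lemma complete_intro:
  assumes N: "subspace N"
    and H: "\<And>y. (\<And>n. y n \<in> N) \<Longrightarrow> (\<And>n. y (Suc n) - y n \<in> AS n N) \<Longrightarrow> \<exists>x\<in>N. \<forall>n. x - y n \<in> AS n N"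
  shows "adically_complete scale a N"
  unfolding complete_iff
proof (intro conjI N ballI)
  fix c assume "c \<in> adic_lim scale a N"
  then have c: "\<And>n. \<exists>x\<in>N. c n = (+) x ` AS n N" "\<And>n. c (Suc n) \<subseteq> c n"
    unfolding adic_lim_def by auto
  then obtain y where y: "\<And>n. y n \<in> N" "\<And>n. c n = (+) (y n) ` AS n N" by metis
  have d: "y (Suc n) - y n \<in> AS n N" for n
  proof -
    have "y (Suc n) \<in> c (Suc n)" using y(2) coset_self[OF asub_subspace] by simp
    then have "y (Suc n) \<in> c n" using c(2) by blast
    then show ?thesis using y(2) coset_mem[OF asub_subspace] by simp
  qed
  have "\<exists>x\<in>N. \<forall>n. x - y n \<in> AS n N" by (rule H) (use y(1) d in auto)
  then obtain x where x: "x \<in> N" "\<And>n. x - y n \<in> AS n N" by blast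
  show "\<exists>x\<in>N. \<forall>n. c n = (+) x ` AS n N"
  proof (intro bexI[of _ x] allI x(1))
    fix n show "c n = (+) x ` AS n N" using y(2)[of n] coset_eq[OF asub_subspace x(2)] by simp
  qed
qed

lemma complete_zero: "adically_complete scale a {0}"
  by (rule complete_intro) (auto simp: asub_zero)

lemma complete_splus:
  assumes C1: "adically_complete scale a N1" and C2: "adically_complete scale a N2"
  shows "adically_complete scale a (splus N1 N2)"
proof -
  have N1: "subspace N1" and N2: "subspace N2" using C1 C2 complete_subspace by auto
  show ?thesis
  proof (rule complete_intro[OF subspace_splus[OF N1 N2]])
    fix y assume y: "\<And>n. y n \<in> splus N1 N2" and d: "\<And>n. y (Suc n) - y n \<in> AS n (splus N1 N2)"
    obtain u0 v0 where uv0: "y 0 = u0 + v0" "u0 \<in> N1" "v0 \<in> N2" using y[of 0] unfolding splus_def by blast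
    have "\<forall>n. \<exists>p. p \<in> AS n N1 \<and> y (Suc n) - y n - p \<in> AS n N2"
    proof
      fix n
      obtain p q where "p \<in> AS n N1" "q \<in> AS n N2" "y (Suc n) - y n = p + q"
        using d[of n] asub_splus[OF N1 N2] unfolding splus_def by blast
      then show "\<exists>p. p \<in> AS n N1 \<and> y (Suc n) - y n - p \<in> AS n N2"
        by (intro exI[of _ p]) (simp add: algebra_simps)
    qed
    then obtain du where du: "\<And>n. du n \<in> AS n N1 \<and> y (Suc n) - y n - du n \<in> AS n N2"
      by (rule choice[THEN exE]) blast
    define dv where "dv n = y (Suc n) - y n - du n" for n
    have duv: "\<And>n. du n \<in> AS n N1" "\<And>n. dv n \<in> AS n N2"
      "\<And>n. y (Suc n) - y n = du n + dv n" using du unfolding dv_def by auto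
    define U where "U n = u0 + (\<Sum>k<n. du k)" for n
    define V where "V n = v0 + (\<Sum>k<n. dv k)" for n
    have U: "U n \<in> N1" for n
    proof -
      have "(\<Sum>k<n. du k) \<in> N1" by (rule subspace_sum[OF N1]) (use duv(1) asub_le[OF N1] in blast)
      then show ?thesis unfolding U_def using uv0(2) subspace_add[OF N1] by blast
    qed
    have V: "V n \<in> N2" for n
    proof -
      have "(\<Sum>k<n. dv k) \<in> N2" by (rule subspace_sum[OF N2]) (use duv(2) asub_le[OF N2] in blast)
      then show ?thesis unfolding V_def using uv0(3) subspace_add[OF N2] by blast
    qed
    have yUV: "y n = U n + V n" for n
    proof (induction n)
      case 0 then show ?case using uv0 by (simp add: U_def V_def)
    next
      case (Suc n)
      have "y (Suc n) = y n + (du n + dv n)" using duv(3)[of n] by (simp add: algebra_simps)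
      then show ?case using Suc by (simp add: U_def V_def algebra_simps)
    qed
    have "\<exists>x\<in>N1. \<forall>n. x - U n \<in> AS n N1"
      by (rule complete_seq[OF C1 U]) (use duv(1) in \<open>simp add: U_def\<close>)
    then obtain X1 where X1: "X1 \<in> N1" "\<And>n. X1 - U n \<in> AS n N1" by blast
    have "\<exists>x\<in>N2. \<forall>n. x - V n \<in> AS n N2"
      by (rule complete_seq[OF C2 V]) (use duv(2) in \<open>simp add: V_def\<close>)
    then obtain X2 where X2: "X2 \<in> N2" "\<And>n. X2 - V n \<in> AS n N2" by blast
    show "\<exists>x\<in>splus N1 N2. \<forall>n. x - y n \<in> AS n (splus N1 N2)"
    proof (intro bexI[of _ "X1 + X2"] allI)
      show "X1 + X2 \<in> splus N1 N2" using X1 X2 unfolding splus_def by blast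
      fix n
      have "X1 - U n \<in> AS n (splus N1 N2)"
        using X1(2) asub_monoN[OF splus_left[OF N2]] by blast
      moreover have "X2 - V n \<in> AS n (splus N1 N2)"
        using X2(2) asub_monoN[OF splus_right[OF N1]] by blast
      ultimately have "(X1 - U n) + (X2 - V n) \<in> AS n (splus N1 N2)" by (rule asub_add)
      then show "X1 + X2 - y n \<in> AS n (splus N1 N2)" using yUV[of n] by (simp add: algebra_simps)
    qed
  qed
qed

definition Cs where "Cs = {x. \<exists>N. adically_complete scale a N \<and> x \<in> N}"

lemma complete_cover: "finite T \<Longrightarrow> T \<subseteq> Cs \<Longrightarrow> \<exists>N. adically_complete scale a N \<and> T \<subseteq> N"
proof (induction T rule: finite_induct)
  case empty then show ?case using complete_zero by blast
next
  case (insert t T)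
  obtain N where N: "adically_complete scale a N" "T \<subseteq> N" using insert by blast
  obtain Nt where Nt: "adically_complete scale a Nt" "t \<in> Nt" using insert.prems unfolding Cs_def by blast
  have "adically_complete scale a (splus Nt N)" by (rule complete_splus[OF Nt(1) N(1)])
  moreover have "insert t T \<subseteq> splus Nt N"
  proof -
    have "Nt \<subseteq> splus Nt N" by (rule splus_left[OF complete_subspace[OF N(1)]])
    moreover have "N \<subseteq> splus Nt N" by (rule splus_right[OF complete_subspace[OF Nt(1)]])
    ultimately show ?thesis using N(2) Nt(2) by blast
  qed
  ultimately show ?case by blast
qed

lemma Cs_subspace: "subspace Cs"
proof (rule subspaceI)
  have "(0::'b) \<in> {0}" by simp
  then show "0 \<in> Cs" unfolding Cs_def using complete_zero by blast
next
  fix x y assume "x \<in> Cs" "y \<in> Cs"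
  then have "{x, y} \<subseteq> Cs" by blast
  then obtain N where N: "adically_complete scale a N" "{x, y} \<subseteq> N" using complete_cover[of "{x,y}"] by auto
  then have "x + y \<in> N" using subspace_add[OF complete_subspace[OF N(1)]] by blast
  then show "x + y \<in> Cs" unfolding Cs_def using N(1) by blast
next
  fix c x assume "x \<in> Cs"
  then obtain N where N: "adically_complete scale a N" "x \<in> N" unfolding Cs_def by blast
  then have "c *s x \<in> N" using subspace_scale[OF complete_subspace[OF N(1)]] by blast
  then show "c *s x \<in> Cs" unfolding Cs_def using N(1) by blast
qed

lemma Cs_complete: "adically_complete scale a Cs"
proof -
  obtain T where T: "finite T" "Cs = span T" using fgsub[OF Cs_subspace] by blast
  have "T \<subseteq> Cs" unfolding T(2) by (rule span_superset)
  then obtain N where N: "adically_complete scale a N" "T \<subseteq> N" using complete_cover T(1) by blast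
  have "Cs \<subseteq> N" unfolding T(2) by (rule span_minimal[OF N(2) complete_subspace[OF N(1)]])
  moreover have "N \<subseteq> Cs" using N(1) unfolding Cs_def by blast
  ultimately have "Cs = N" by blast
  then show ?thesis using N(1) by simp
qed

lemma max_complete_eq: "max_complete scale a = Cs"
  unfolding max_complete_def
proof (rule the_equality)
  show "adically_complete scale a Cs \<and> (\<forall>N'. adically_complete scale a N' \<longrightarrow> N' \<subseteq> Cs)"
    using Cs_complete unfolding Cs_def by blast
  fix N assume "adically_complete scale a N \<and> (\<forall>N'. adically_complete scale a N' \<longrightarrow> N' \<subseteq> N)"
  then show "N = Cs" using Cs_complete unfolding Cs_def by blast
qed

lemma mc_complete: "adically_complete scale a (max_complete scale a)"
  using Cs_complete max_complete_eq by simp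

lemma mc_greatest: "adically_complete scale a N \<Longrightarrow> N \<subseteq> max_complete scale a"
  unfolding max_complete_eq Cs_def by blast

lemma mc_subspace: "subspace (max_complete scale a)"
  using mc_complete complete_subspace by blast

end



definition cosR :: "'r::comm_ring_1 set \<Rightarrow> 'r \<Rightarrow> nat \<Rightarrow> 'r set" where
  "cosR a x n = (+) x ` ideal_pow a n"

lemma cosR_mem: "z \<in> cosR a x n \<longleftrightarrow> z - x \<in> ideal_pow a n"
  unfolding cosR_def using R.coset_mem[of "ideal_pow a n"] ideal_pow_ideal is_ideal_iff by blast

lemma cosR_eq: "x - y \<in> ideal_pow a n \<Longrightarrow> cosR a x n = cosR a y n"
  unfolding cosR_def using R.coset_eq[of "ideal_pow a n"] ideal_pow_ideal is_ideal_iff by blast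

lemma cosR_self: "x \<in> cosR a x n"
  by (simp add: cosR_mem ideal_0)

lemma completion_repr:
  assumes a: "is_ideal a" and c: "c \<in> completion a"
  shows "\<exists>\<rho>. c = (\<lambda>n. cosR a (\<rho> n) n)"
proof -
  have "\<forall>n. \<exists>x. c n = cosR a x n"
    using c unfolding completion_def adic_lim_def adic_sub_R[OF a] cosR_def by blast
  then obtain \<rho> where "\<And>n. c n = cosR a (\<rho> n) n" by metis
  then show ?thesis by blast
qed

lemma completion_cos_iff:
  assumes a: "is_ideal a"
  shows "(\<lambda>n. cosR a (f n) n) \<in> completion a \<longleftrightarrow> (\<forall>n. f (Suc n) - f n \<in> ideal_pow a n)"
proof
  assume c: "(\<lambda>n. cosR a (f n) n) \<in> completion a"
  show "\<forall>n. f (Suc n) - f n \<in> ideal_pow a n"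
  proof
    fix n
    have "cosR a (f (Suc n)) (Suc n) \<subseteq> cosR a (f n) n"
      using c unfolding completion_def adic_lim_def by blast
    then have "f (Suc n) \<in> cosR a (f n) n" using cosR_self by blast
    then show "f (Suc n) - f n \<in> ideal_pow a n" by (simp add: cosR_mem)
  qed
next
  assume d: "\<forall>n. f (Suc n) - f n \<in> ideal_pow a n"
  have "cosR a (f (Suc n)) (Suc n) \<subseteq> cosR a (f n) n" for n
  proof
    fix z assume "z \<in> cosR a (f (Suc n)) (Suc n)"
    then have "z - f (Suc n) \<in> ideal_pow a n" using ideal_pow_Suc_sub[OF a] by (auto simp: cosR_mem)
    then have "(z - f (Suc n)) + (f (Suc n) - f n) \<in> ideal_pow a n" using d ideal_add[OF ideal_pow_ideal] by blast
    then show "z \<in> cosR a (f n) n" by (simp add: cosR_mem)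
  qed
  then show "(\<lambda>n. cosR a (f n) n) \<in> completion a"
    unfolding completion_def adic_lim_def adic_sub_R[OF a] cosR_def by blast
qed

lemma completion_chain:
  assumes a: "is_ideal a" and c: "(\<lambda>n. cosR a (f n) n) \<in> completion a" and kl: "k \<le> l"
  shows "f l - f k \<in> ideal_pow a k"
  using kl
proof (induction l rule: dec_induct)
  case base then show ?case by (simp add: ideal_0)
next
  case (step l)
  have "f (Suc l) - f l \<in> ideal_pow a l" using c completion_cos_iff[OF a] by blast
  then have "f (Suc l) - f l \<in> ideal_pow a k" using ideal_pow_mono[OF a step(1)] by blast
  then have "(f (Suc l) - f l) + (f l - f k) \<in> ideal_pow a k" using step(3) ideal_add[OF ideal_pow_ideal] by blast
  then show ?case by simp
qed

lemma comp_add_cos: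
  "comp_add (\<lambda>n. cosR a (f n) n) (\<lambda>n. cosR a (g n) n) = (\<lambda>n. cosR a (f n + g n) n)"
proof (rule ext, intro equalityI subsetI)
  fix n z assume "z \<in> comp_add (\<lambda>n. cosR a (f n) n) (\<lambda>n. cosR a (g n) n) n"
  then obtain x y where "z = x + y" "x - f n \<in> ideal_pow a n" "y - g n \<in> ideal_pow a n"
    unfolding comp_add_def by (auto simp: cosR_mem)
  moreover have "(x - f n) + (y - g n) \<in> ideal_pow a n" using calculation ideal_add[OF ideal_pow_ideal] by blast
  ultimately show "z \<in> cosR a (f n + g n) n" by (simp add: cosR_mem algebra_simps)
next
  fix n z assume "z \<in> cosR a (f n + g n) n"
  then have "(z - g n) - f n \<in> ideal_pow a n" by (simp add: cosR_mem algebra_simps)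
  then have "z - g n \<in> cosR a (f n) n" "g n \<in> cosR a (g n) n" by (simp_all add: cosR_mem ideal_0)
  moreover have "z = (z - g n) + g n" by simp
  ultimately show "z \<in> comp_add (\<lambda>n. cosR a (f n) n) (\<lambda>n. cosR a (g n) n) n"
    unfolding comp_add_def by blast
qed

lemma comp_scale_cos:
  assumes a: "is_ideal a"
  shows "comp_scale a r (\<lambda>n. cosR a (f n) n) = (\<lambda>n. cosR a (r * f n) n)"
proof (rule ext, intro equalityI subsetI)
  fix n z assume "z \<in> comp_scale a r (\<lambda>n. cosR a (f n) n) n"
  then obtain x w where "z = r * x + w" "x - f n \<in> ideal_pow a n" "w \<in> ideal_pow a n"
    unfolding comp_scale_def adic_sub_R[OF a] by (auto simp: cosR_mem)
  moreover have "r * (x - f n) + w \<in> ideal_pow a n" using calculation ideal_add[OF ideal_pow_ideal] ideal_multL[OF ideal_pow_ideal] by blast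
  ultimately show "z \<in> cosR a (r * f n) n" by (simp add: cosR_mem algebra_simps)
next
  fix n z assume "z \<in> cosR a (r * f n) n"
  then have "z - r * f n \<in> ideal_pow a n" by (simp add: cosR_mem)
  moreover have "f n \<in> cosR a (f n) n" by (rule cosR_self)
  moreover have "z = r * f n + (z - r * f n)" by simp
  ultimately show "z \<in> comp_scale a r (\<lambda>n. cosR a (f n) n) n"
    unfolding comp_scale_def adic_sub_R[OF a] by blast
qed

lemma comp_one_cos: "is_ideal a \<Longrightarrow> comp_one a = (\<lambda>n. cosR a 1 n)"
  unfolding comp_one_def cosR_def adic_sub_R by simp

context ctx
begin

abbreviation MC where "MC \<equiv> max_complete scale a"

definition HP where "HP c m y \<longleftrightarrow> y \<in> MC \<and> (\<forall>n. \<forall>r\<in>c n. y - r *s m \<in> AS n MC)"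

lemma hat_unique:
  assumes c: "c \<in> completion a" and y: "HP c m y" and y': "HP c m y'"
  shows "y = y'"
proof -
  obtain \<rho> where \<rho>: "c = (\<lambda>n. cosR a (\<rho> n) n)" using completion_repr[OF aI c] by blast
  have "y - y' \<in> AS n MC" for n
  proof -
    have "\<rho> n \<in> c n" using \<rho> cosR_self by simp
    then have "y - \<rho> n *s m \<in> AS n MC" "y' - \<rho> n *s m \<in> AS n MC" using y y' unfolding HP_def by blast+
    then have "(y - \<rho> n *s m) - (y' - \<rho> n *s m) \<in> AS n MC" by (rule asub_diff)
    then show ?thesis by simp
  qed
  then show ?thesis using Krull[OF mc_subspace, of "y - y'"] by simp
qed

lemma hat_exists:
  assumes c: "c \<in> completion a" and m: "m \<in> MC"
  shows "\<exists>y. HP c m y"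
proof -
  obtain \<rho> where \<rho>: "c = (\<lambda>n. cosR a (\<rho> n) n)" using completion_repr[OF aI c] by blast
  have d: "\<rho> (Suc n) - \<rho> n \<in> ideal_pow a n" for n using c \<rho> completion_cos_iff[OF aI] by blast
  have "\<exists>x\<in>MC. \<forall>n. x - \<rho> n *s m \<in> AS n MC"
  proof (rule complete_seq[OF mc_complete])
    show "\<rho> n *s m \<in> MC" for n using m subspace_scale[OF mc_subspace] by blast
    fix n
    have "(\<rho> (Suc n) - \<rho> n) *s m \<in> AS n MC" using d m by (intro asub_mem)
    then show "\<rho> (Suc n) *s m - \<rho> n *s m \<in> AS n MC" by (simp add: scale_left_diff_distrib)
  qed
  then obtain x where x: "x \<in> MC" "\<And>n. x - \<rho> n *s m \<in> AS n MC" by blast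
  have "HP c m x" unfolding HP_def
  proof (intro conjI x(1) allI ballI)
    fix n r assume "r \<in> c n"
    then have "r - \<rho> n \<in> ideal_pow a n" using \<rho> by (simp add: cosR_mem)
    then have "(r - \<rho> n) *s m \<in> AS n MC" using m by (intro asub_mem)
    then have "(x - \<rho> n *s m) - (r - \<rho> n) *s m \<in> AS n MC" using x(2) asub_diff by blast
    then show "x - r *s m \<in> AS n MC" by (simp add: scale_left_diff_distrib)
  qed
  then show ?thesis by blast
qed

lemma hat_act_HP: "hat_act scale a MC c m = (THE y. HP c m y)"
  unfolding hat_act_def HP_def by simp

lemma hat_prop:
  assumes c: "c \<in> completion a" and m: "m \<in> MC"
  shows "HP c m (hat_act scale a MC c m)"
proof -
  obtain y where y: "HP c m y" using hat_exists[OF c m] by blast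
  have "HP c m (THE y. HP c m y)" by (rule theI[of "HP c m", OF y]) (rule hat_unique[OF c _ y])
  then show ?thesis by (simp add: hat_act_HP)
qed

lemma hat_eq:
  assumes c: "c \<in> completion a" and y: "HP c m y"
  shows "hat_act scale a MC c m = y"
  unfolding hat_act_HP
  by (rule the_equality[of "HP c m", OF y]) (rule hat_unique[OF c _ y])

end



context ctx
begin

lemma comp_add_in:
  assumes c: "c \<in> completion a" and d: "d \<in> completion a"
  shows "comp_add c d \<in> completion a"
proof -
  obtain f where f: "c = (\<lambda>n. cosR a (f n) n)" using completion_repr[OF aI c] by blast
  obtain g where g: "d = (\<lambda>n. cosR a (g n) n)" using completion_repr[OF aI d] by blast
  have "(f (Suc n) - f n) + (g (Suc n) - g n) \<in> ideal_pow a n" for n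
    using c d f g completion_cos_iff[OF aI] ideal_add[OF ideal_pow_ideal] by blast
  then have "(\<lambda>n. cosR a (f n + g n) n) \<in> completion a"
    unfolding completion_cos_iff[OF aI] by (simp add: algebra_simps)
  then show ?thesis using f g by (simp add: comp_add_cos)
qed

lemma comp_scale_in:
  assumes c: "c \<in> completion a"
  shows "comp_scale a r c \<in> completion a"
proof -
  obtain f where f: "c = (\<lambda>n. cosR a (f n) n)" using completion_repr[OF aI c] by blast
  have "r * (f (Suc n) - f n) \<in> ideal_pow a n" for n
    using c f completion_cos_iff[OF aI] ideal_multL[OF ideal_pow_ideal] by blast
  then have "(\<lambda>n. cosR a (r * f n) n) \<in> completion a"
    unfolding completion_cos_iff[OF aI] by (simp add: algebra_simps)
  then show ?thesis using f comp_scale_cos[OF aI] by simp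
qed

lemma cos_const_in: "(\<lambda>n. cosR a x n) \<in> completion a"
  unfolding completion_cos_iff[OF aI] by (simp add: ideal_0)

lemma comp_one_in: "comp_one a \<in> completion a"
  using comp_one_cos[OF aI] cos_const_in by simp

lemma HP_add:
  assumes "HP c m y" "HP d m z"
  shows "HP (comp_add c d) m (y + z)"
  unfolding HP_def
proof (intro conjI allI ballI)
  show "y + z \<in> MC" using assms subspace_add[OF mc_subspace] unfolding HP_def by blast
  fix n r assume "r \<in> comp_add c d n"
  then obtain x w where r: "r = x + w" "x \<in> c n" "w \<in> d n" unfolding comp_add_def by blast
  then have "(y - x *s m) + (z - w *s m) \<in> AS n MC" using assms unfolding HP_def by (intro asub_add) auto
  then show "y + z - r *s m \<in> AS n MC" using r by (simp add: algebra_simps)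
qed

lemma HP_scale:
  assumes "HP c m y" "m \<in> MC"
  shows "HP (comp_scale a r c) m (r *s y)"
  unfolding HP_def
proof (intro conjI allI ballI)
  show "r *s y \<in> MC" using assms subspace_scale[OF mc_subspace] unfolding HP_def by blast
  fix n s assume "s \<in> comp_scale a r c n"
  then obtain x w where s: "s = r * x + w" "x \<in> c n" "w \<in> ideal_pow a n"
    unfolding comp_scale_def adic_sub_R[OF aI] by blast
  have "r *s (y - x *s m) \<in> AS n MC" using assms s unfolding HP_def by (intro asub_scale) auto
  moreover have "w *s m \<in> AS n MC" using s assms by (intro asub_mem)
  ultimately have "r *s (y - x *s m) - w *s m \<in> AS n MC" by (rule asub_diff)
  then show "r *s y - s *s m \<in> AS n MC" using s by (simp add: algebra_simps)
qed

lemma mf_hom: "m \<in> MC \<Longrightarrow> map_f scale a m \<in> hom_completion scale a"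
  unfolding hom_completion_def
proof (intro CollectI conjI ballI allI impI)
  assume m: "m \<in> MC"
  fix c d assume c: "c \<in> completion a" and d: "d \<in> completion a"
  show "map_f scale a m (comp_add c d) = map_f scale a m c + map_f scale a m d"
    unfolding map_f_def using c d comp_add_in
    by (simp add: hat_eq[OF comp_add_in[OF c d] HP_add[OF hat_prop[OF c m] hat_prop[OF d m]]])
next
  assume m: "m \<in> MC"
  fix r c assume c: "c \<in> completion a"
  show "map_f scale a m (comp_scale a r c) = r *s map_f scale a m c"
    unfolding map_f_def using c comp_scale_in
    by (simp add: hat_eq[OF comp_scale_in[OF c] HP_scale[OF hat_prop[OF c m] m]])
next
  fix c assume "c \<notin> completion a"
  then show "map_f scale a m c = 0" unfolding map_f_def by simp
qed

lemma ef_id: "m \<in> MC \<Longrightarrow> map_e a (map_f scale a m) = m"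
proof -
  assume m: "m \<in> MC"
  have "HP (comp_one a) m m" unfolding HP_def
  proof (intro conjI m allI ballI)
    fix n r assume "r \<in> comp_one a n"
    then have "r - 1 \<in> ideal_pow a n" using comp_one_cos[OF aI] by (simp add: cosR_mem)
    then have "(r - 1) *s m \<in> AS n MC" using m by (intro asub_mem)
    then have "- ((r - 1) *s m) \<in> AS n MC" by (rule asub_neg)
    then show "m - r *s m \<in> AS n MC" by (simp add: algebra_simps)
  qed
  then show ?thesis unfolding map_e_def map_f_def using comp_one_in hat_eq by simp
qed

lemma mf_add: "m \<in> MC \<Longrightarrow> m' \<in> MC \<Longrightarrow>
  map_f scale a (m + m') = (\<lambda>c. map_f scale a m c + map_f scale a m' c)"
proof (rule ext)
  fix c assume m: "m \<in> MC" and m': "m' \<in> MC"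
  show "map_f scale a (m + m') c = map_f scale a m c + map_f scale a m' c"
  proof (cases "c \<in> completion a")
    case c: True
    have "HP c (m + m') (hat_act scale a MC c m + hat_act scale a MC c m')"
      unfolding HP_def
    proof (intro conjI allI ballI)
      show "hat_act scale a MC c m + hat_act scale a MC c m' \<in> MC"
        using hat_prop[OF c m] hat_prop[OF c m'] subspace_add[OF mc_subspace] unfolding HP_def by blast
      fix n r assume r: "r \<in> c n"
      have "(hat_act scale a MC c m - r *s m) + (hat_act scale a MC c m' - r *s m') \<in> AS n MC"
        using hat_prop[OF c m] hat_prop[OF c m'] r unfolding HP_def by (intro asub_add) auto
      then show "hat_act scale a MC c m + hat_act scale a MC c m' - r *s (m + m') \<in> AS n MC"
        by (simp add: algebra_simps)
    qed
    then show ?thesis unfolding map_f_def using c hat_eq by simp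
  next
    case False then show ?thesis unfolding map_f_def by simp
  qed
qed

lemma mf_scale: "m \<in> MC \<Longrightarrow> map_f scale a (r *s m) = (\<lambda>c. r *s map_f scale a m c)"
proof (rule ext)
  fix c assume m: "m \<in> MC"
  show "map_f scale a (r *s m) c = r *s map_f scale a m c"
  proof (cases "c \<in> completion a")
    case c: True
    have "HP c (r *s m) (r *s hat_act scale a MC c m)"
      unfolding HP_def
    proof (intro conjI allI ballI)
      show "r *s hat_act scale a MC c m \<in> MC"
        using hat_prop[OF c m] subspace_scale[OF mc_subspace] unfolding HP_def by blast
      fix n s assume s: "s \<in> c n"
      have "r *s (hat_act scale a MC c m - s *s m) \<in> AS n MC"
        using hat_prop[OF c m] s unfolding HP_def by (intro asub_scale) auto
      then show "r *s hat_act scale a MC c m - s *s (r *s m) \<in> AS n MC"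
        by (simp add: algebra_simps mult.commute)
    qed
    then show ?thesis unfolding map_f_def using c hat_eq by simp
  next
    case False then show ?thesis unfolding map_f_def by simp
  qed
qed

end



context ctx
begin

lemma hom_add: "\<phi> \<in> hom_completion scale a \<Longrightarrow> c \<in> completion a \<Longrightarrow> d \<in> completion a \<Longrightarrow>
    \<phi> (comp_add c d) = \<phi> c + \<phi> d"
  unfolding hom_completion_def by blast
lemma hom_scale: "\<phi> \<in> hom_completion scale a \<Longrightarrow> c \<in> completion a \<Longrightarrow>
    \<phi> (comp_scale a r c) = r *s \<phi> c"
  unfolding hom_completion_def by blast
lemma hom_out: "\<phi> \<in> hom_completion scale a \<Longrightarrow> c \<notin> completion a \<Longrightarrow> \<phi> c = 0"
  unfolding hom_completion_def by blast

lemma hom_zero: "\<phi> \<in> hom_completion scale a \<Longrightarrow> \<phi> (\<lambda>k. cosR a 0 k) = 0"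
proof -
  assume h: "\<phi> \<in> hom_completion scale a"
  have "(\<lambda>k. cosR a 0 k) = comp_scale a 0 (comp_one a)"
    by (simp add: comp_one_cos[OF aI] comp_scale_cos[OF aI])
  then show ?thesis using hom_scale[OF h comp_one_in] by simp
qed

lemma hom_lin:
  assumes h: "\<phi> \<in> hom_completion scale a" and G: "finite G"
  shows "(\<forall>g\<in>G. (\<lambda>k. cosR a (B g k) k) \<in> completion a) \<Longrightarrow>
    (\<lambda>k. cosR a (\<Sum>g\<in>G. g * B g k) k) \<in> completion a \<and>
    \<phi> (\<lambda>k. cosR a (\<Sum>g\<in>G. g * B g k) k) = (\<Sum>g\<in>G. g *s \<phi> (\<lambda>k. cosR a (B g k) k))"
  using G
proof (induction G rule: finite_induct)
  case empty then show ?case using hom_zero[OF h] cos_const_in by simp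
next
  case (insert g G)
  have cg: "(\<lambda>k. cosR a (B g k) k) \<in> completion a" using insert.prems by simp
  have IH: "(\<lambda>k. cosR a (\<Sum>g\<in>G. g * B g k) k) \<in> completion a"
    "\<phi> (\<lambda>k. cosR a (\<Sum>g\<in>G. g * B g k) k) = (\<Sum>g\<in>G. g *s \<phi> (\<lambda>k. cosR a (B g k) k))"
    using insert by auto
  have eq: "(\<lambda>k. cosR a (\<Sum>g\<in>insert g G. g * B g k) k) =
    comp_add (comp_scale a g (\<lambda>k. cosR a (B g k) k)) (\<lambda>k. cosR a (\<Sum>g\<in>G. g * B g k) k)"
    using insert.hyps by (simp add: comp_scale_cos[OF aI] comp_add_cos)
  have cs: "comp_scale a g (\<lambda>k. cosR a (B g k) k) \<in> completion a" by (rule comp_scale_in[OF cg])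
  show ?case
    unfolding eq
    using comp_add_in[OF cs IH(1)] hom_add[OF h cs IH(1)] hom_scale[OF h cg] IH(2) insert.hyps
    by simp
qed

abbreviation Img where "Img \<phi> \<equiv> \<phi> ` completion a"

lemma key:
  assumes h: "\<phi> \<in> hom_completion scale a" and c: "c \<in> completion a" and r: "r \<in> c n"
  shows "\<phi> c - r *s \<phi> (comp_one a) \<in> AS n (Img \<phi>)"
proof -
  obtain \<rho> where \<rho>: "c = (\<lambda>k. cosR a (\<rho> k) k)" using completion_repr[OF aI c] by blast
  have cc: "(\<lambda>k. cosR a (\<rho> k) k) \<in> completion a" using c \<rho> by simp
  define e where "e = comp_add c (comp_scale a (- r) (comp_one a))"
  have e_eq: "e = (\<lambda>k. cosR a (\<rho> k - r) k)"
    unfolding e_def \<rho> by (simp add: comp_one_cos[OF aI] comp_scale_cos[OF aI] comp_add_cos)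
  have e_in: "e \<in> completion a" unfolding e_def by (intro comp_add_in c comp_scale_in comp_one_in)
  have phie: "\<phi> e = \<phi> c - r *s \<phi> (comp_one a)"
    unfolding e_def using hom_add[OF h c comp_scale_in[OF comp_one_in]] hom_scale[OF h comp_one_in] by simp
  have rn: "\<rho> n - r \<in> ideal_pow a n"
  proof -
    have "r - \<rho> n \<in> ideal_pow a n" using r \<rho> by (simp add: cosR_mem)
    then have "- (r - \<rho> n) \<in> ideal_pow a n" by (rule ideal_neg[OF ideal_pow_ideal])
    then show ?thesis by simp
  qed
  obtain G where G: "finite G" "ideal_pow a n = ideal_gen G"
    using noeth ideal_pow_ideal unfolding noetherian_ring_def by blast
  obtain \<gamma> where \<gamma>: "\<rho> n - r = (\<Sum>g\<in>G. \<gamma> g * g)" using ideal_gen_finite_repr[OF G(1)] rn G(2) by blast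
  have "\<forall>j. \<exists>\<beta>. (\<forall>g. \<beta> g \<in> ideal_pow a j) \<and> \<rho> (Suc (n + j)) - \<rho> (n + j) = (\<Sum>g\<in>G. g * \<beta> g)"
  proof
    fix j
    have "\<rho> (Suc (n + j)) - \<rho> (n + j) \<in> ideal_pow a (n + j)" using cc completion_cos_iff[OF aI] by blast
    then show "\<exists>\<beta>. (\<forall>g. \<beta> g \<in> ideal_pow a j) \<and> \<rho> (Suc (n + j)) - \<rho> (n + j) = (\<Sum>g\<in>G. g * \<beta> g)"
      by (rule ideal_pow_decomp[OF G])
  qed
  then obtain \<beta> where \<beta>: "\<And>j g. \<beta> j g \<in> ideal_pow a j"
    "\<And>j. \<rho> (Suc (n + j)) - \<rho> (n + j) = (\<Sum>g\<in>G. g * \<beta> j g)" by metis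
  define B where "B g j = \<gamma> g + (\<Sum>i<j. \<beta> i g)" for g j
  have Bin: "(\<lambda>k. cosR a (B g k) k) \<in> completion a" for g
    unfolding completion_cos_iff[OF aI] B_def using \<beta>(1) by simp
  have Bsum: "(\<Sum>g\<in>G. g * B g j) = \<rho> (n + j) - r" for j
  proof (induction j)
    case 0 then show ?case using \<gamma> by (simp add: B_def mult.commute)
  next
    case (Suc j)
    have "(\<Sum>g\<in>G. g * B g (Suc j)) = (\<Sum>g\<in>G. g * B g j) + (\<Sum>g\<in>G. g * \<beta> j g)"
      by (simp add: B_def distrib_left sum.distrib)
    also have "\<dots> = \<rho> (Suc (n + j)) - r" using Suc \<beta>(2)[of j] by (simp add: algebra_simps)
    finally show ?case by simp
  qed
  have e_eq2: "e = (\<lambda>k. cosR a (\<Sum>g\<in>G. g * B g k) k)"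
  proof (rule ext)
    fix k
    have "\<rho> (n + k) - \<rho> k \<in> ideal_pow a k" by (rule completion_chain[OF aI cc]) simp
    then have "(\<Sum>g\<in>G. g * B g k) - (\<rho> k - r) \<in> ideal_pow a k" using Bsum by simp
    then show "e k = cosR a (\<Sum>g\<in>G. g * B g k) k" unfolding e_eq using cosR_eq by metis
  qed
  have "\<phi> e = (\<Sum>g\<in>G. g *s \<phi> (\<lambda>k. cosR a (B g k) k))"
    unfolding e_eq2 using hom_lin[OF h G(1)] Bin by blast
  also have "\<dots> \<in> AS n (Img \<phi>)"
  proof (rule subspace_sum[OF asub_subspace])
    fix g assume "g \<in> G"
    then have "g \<in> ideal_pow a n" using G(2) ideal_gen_superset by blast
    then show "g *s \<phi> (\<lambda>k. cosR a (B g k) k) \<in> AS n (Img \<phi>)" using Bin by (intro asub_mem) auto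
  qed
  finally show ?thesis using phie by simp
qed

lemma Img_subspace:
  assumes h: "\<phi> \<in> hom_completion scale a"
  shows "subspace (Img \<phi>)"
proof (rule subspaceI)
  have "\<phi> (\<lambda>k. cosR a 0 k) = 0" by (rule hom_zero[OF h])
  then show "0 \<in> Img \<phi>" using cos_const_in by (metis image_eqI)
next
  fix x y assume "x \<in> Img \<phi>" "y \<in> Img \<phi>"
  then obtain c d where "c \<in> completion a" "d \<in> completion a" "x = \<phi> c" "y = \<phi> d" by blast
  then show "x + y \<in> Img \<phi>" using hom_add[OF h] comp_add_in by (metis image_eqI)
next
  fix r x assume "x \<in> Img \<phi>"
  then obtain c where "c \<in> completion a" "x = \<phi> c" by blast
  then show "r *s x \<in> Img \<phi>" using hom_scale[OF h] comp_scale_in by (metis image_eqI)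
qed

lemma asub_span_single:
  assumes "z \<in> AS n (span {x})"
  shows "\<exists>\<alpha>. \<alpha> \<in> ideal_pow a n \<and> z = \<alpha> *s x"
proof -
  let ?T = "{\<alpha> *s x | \<alpha>. \<alpha> \<in> ideal_pow a n}"
  have T: "subspace ?T"
  proof (rule subspaceI)
    have "0 = 0 *s x" by simp
    then show "0 \<in> ?T" using ideal_0[OF ideal_pow_ideal] by blast
  next
    fix y w assume "y \<in> ?T" "w \<in> ?T"
    then obtain \<alpha> \<beta> where "y = \<alpha> *s x" "w = \<beta> *s x" "\<alpha> \<in> ideal_pow a n" "\<beta> \<in> ideal_pow a n" by blast
    moreover then have "y + w = (\<alpha> + \<beta>) *s x" by (simp add: scale_left_distrib)
    ultimately show "y + w \<in> ?T" using ideal_add[OF ideal_pow_ideal] by blast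
  next
    fix c y assume "y \<in> ?T"
    then obtain \<alpha> where "y = \<alpha> *s x" "\<alpha> \<in> ideal_pow a n" by blast
    moreover then have "c *s y = (c * \<alpha>) *s x" by simp
    ultimately show "c *s y \<in> ?T" using ideal_multL[OF ideal_pow_ideal] by blast
  qed
  have "AS n (span {x}) \<subseteq> ?T"
  proof (rule asub_minimal[OF T])
    fix r y assume r: "r \<in> ideal_pow a n" and "y \<in> span {x}"
    then obtain k where "y = k *s x" using span_singleton by blast
    then have "r *s y = (r * k) *s x" by simp
    moreover have "r * k \<in> ideal_pow a n" using r ideal_multR[OF ideal_pow_ideal] by blast
    ultimately show "r *s y \<in> ?T" by blast
  qed
  then show ?thesis using assms by blast
qed

lemma hom_main:
  assumes h: "\<phi> \<in> hom_completion scale a"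
  shows "\<phi> (comp_one a) \<in> MC \<and> Img \<phi> \<subseteq> MC"
proof -
  define x where "x = \<phi> (comp_one a)"
  have I: "subspace (Img \<phi>)" by (rule Img_subspace[OF h])
  have xI: "x \<in> Img \<phi>" unfolding x_def using comp_one_in by blast
  obtain T where T: "finite T" "Img \<phi> = span T" using fgsub[OF I] by blast
  have "span T \<subseteq> splus (span {x}) (AS 1 (span T))"
  proof
    fix v assume "v \<in> span T"
    then obtain c where c: "c \<in> completion a" "v = \<phi> c" using T(2) by blast
    obtain \<rho> where \<rho>: "c = (\<lambda>k. cosR a (\<rho> k) k)" using completion_repr[OF aI c(1)] by blast
    have "\<rho> 1 \<in> c 1" using \<rho> cosR_self by simp
    then have "v - \<rho> 1 *s x \<in> AS 1 (span T)" using key[OF h c(1)] c(2) T(2) x_def by simp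
    moreover have "\<rho> 1 *s x \<in> span {x}" by (intro span_scale span_base) simp
    moreover have "v = \<rho> 1 *s x + (v - \<rho> 1 *s x)" by simp
    ultimately show "v \<in> splus (span {x}) (AS 1 (span T))" unfolding splus_def by blast
  qed
  then have "span T \<subseteq> span {x}" using nakayama[OF aI jac T(1)] by simp
  moreover have "span {x} \<subseteq> span T" using xI T(2) span_minimal[OF _ I] by simp
  ultimately have Ix: "Img \<phi> = span {x}" using T by blast
  have "adically_complete scale a (span {x})"
  proof (rule complete_intro[OF subspace_span])
    fix y assume y: "\<And>n. y n \<in> span {x}" and d: "\<And>n. y (Suc n) - y n \<in> AS n (span {x})"
    have "\<forall>n. \<exists>s. y n = s *s x" using y span_singleton by blast
    then obtain s where s: "\<And>n. y n = s n *s x" by metis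
    have "\<forall>n. \<exists>\<alpha>. \<alpha> \<in> ideal_pow a n \<and> y (Suc n) - y n = \<alpha> *s x" using d asub_span_single by blast
    then obtain \<alpha> where \<alpha>: "\<And>n. \<alpha> n \<in> ideal_pow a n" "\<And>n. y (Suc n) - y n = \<alpha> n *s x" by metis
    define t where "t n = s 0 + (\<Sum>i<n. \<alpha> i)" for n
    have ty: "t n *s x = y n" for n
    proof (induction n)
      case 0 then show ?case by (simp add: t_def s)
    next
      case (Suc n)
      have "t (Suc n) *s x = t n *s x + \<alpha> n *s x" by (simp add: t_def scale_left_distrib)
      also have "\<dots> = y (Suc n)" using Suc \<alpha>(2)[of n] by (simp add: algebra_simps)
      finally show ?case .
    qed
    define c where "c = (\<lambda>k. cosR a (t k) k)"
    have c: "c \<in> completion a" unfolding c_def completion_cos_iff[OF aI] t_def using \<alpha>(1) by simp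
    show "\<exists>X\<in>span {x}. \<forall>n. X - y n \<in> AS n (span {x})"
    proof (intro bexI[of _ "\<phi> c"] allI)
      show "\<phi> c \<in> span {x}" using c Ix by blast
      fix n
      have "t n \<in> c n" unfolding c_def by (rule cosR_self)
      then have "\<phi> c - t n *s x \<in> AS n (Img \<phi>)" using key[OF h c] x_def by simp
      then show "\<phi> c - y n \<in> AS n (span {x})" using ty Ix by simp
    qed
  qed
  then have "span {x} \<subseteq> MC" by (rule mc_greatest)
  then show ?thesis using Ix x_def span_base[of x "{x}"] by auto
qed

lemma fe_id:
  assumes h: "\<phi> \<in> hom_completion scale a"
  shows "map_f scale a (map_e a \<phi>) = \<phi>"
proof (rule ext)
  fix c
  have x: "\<phi> (comp_one a) \<in> MC" and IM: "Img \<phi> \<subseteq> MC" using hom_main[OF h] by auto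
  show "map_f scale a (map_e a \<phi>) c = \<phi> c"
  proof (cases "c \<in> completion a")
    case c: True
    have "HP c (\<phi> (comp_one a)) (\<phi> c)" unfolding HP_def
    proof (intro conjI allI ballI)
      show "\<phi> c \<in> MC" using c IM by blast
      fix n r assume "r \<in> c n"
      then have "\<phi> c - r *s \<phi> (comp_one a) \<in> AS n (Img \<phi>)" by (rule key[OF h c])
      then show "\<phi> c - r *s \<phi> (comp_one a) \<in> AS n MC" using asub_monoN[OF IM] by blast
    qed
    then show ?thesis unfolding map_f_def map_e_def using c hat_eq by simp
  next
    case False then show ?thesis unfolding map_f_def using hom_out[OF h] by simp
  qed
qed

end



context ctx
begin

lemma mf_zero: "map_f scale a 0 = (\<lambda>c. 0)"
  using mf_scale[of 0 0] subspace_0[OF mc_subspace] by simp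

lemma mf_sum:
  assumes "finite T" "T \<subseteq> MC"
  shows "map_f scale a (\<Sum>t\<in>T. u t *s t) = (\<lambda>c. \<Sum>t\<in>T. u t *s map_f scale a t c)"
  using assms
proof (induction T rule: finite_induct)
  case empty then show ?case using mf_zero by simp
next
  case (insert t T)
  have t: "t \<in> MC" and T: "T \<subseteq> MC" using insert.prems by auto
  have s1: "u t *s t \<in> MC" using t subspace_scale[OF mc_subspace] by blast
  have s2: "(\<Sum>t\<in>T. u t *s t) \<in> MC"
    by (intro subspace_sum[OF mc_subspace] subspace_scale[OF mc_subspace]) (use T in blast)
  show ?case using insert.hyps mf_add[OF s1 s2] mf_scale[OF t] insert.IH[OF T] by simp
qed

lemma fin_hom:
  "\<exists>\<Phi>. finite \<Phi> \<and> \<Phi> \<subseteq> hom_completion scale a \<and>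
     (\<forall>\<phi>\<in>hom_completion scale a. \<exists>u. \<phi> = (\<lambda>c. \<Sum>\<psi>\<in>\<Phi>. scale (u \<psi>) (\<psi> c)))"
proof -
  obtain T where T: "finite T" "MC = span T" using fgsub[OF mc_subspace] by blast
  have TM: "T \<subseteq> MC" using T span_superset by blast
  have inj: "inj_on (map_f scale a) T"
  proof (rule inj_on_inverseI[of _ "map_e a"])
    fix t assume "t \<in> T"
    then show "map_e a (map_f scale a t) = t" using TM ef_id by blast
  qed
  show ?thesis
  proof (intro exI[of _ "map_f scale a ` T"] conjI ballI)
    show "finite (map_f scale a ` T)" using T by simp
    show "map_f scale a ` T \<subseteq> hom_completion scale a" using TM mf_hom by blast
    fix \<phi> assume h: "\<phi> \<in> hom_completion scale a"
    have "map_e a \<phi> \<in> MC" using hom_main[OF h] by (simp add: map_e_def)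
    then have "map_e a \<phi> \<in> range (\<lambda>u. \<Sum>t\<in>T. u t *s t)" using T(2) span_finite[OF T(1)] by simp
    then obtain u where u: "map_e a \<phi> = (\<Sum>t\<in>T. u t *s t)" by blast
    have "\<phi> = map_f scale a (map_e a \<phi>)" using fe_id[OF h] by simp
    also have "\<dots> = (\<lambda>c. \<Sum>t\<in>T. u t *s map_f scale a t c)" unfolding u by (rule mf_sum[OF T(1) TM])
    also have "\<dots> = (\<lambda>c. \<Sum>\<psi>\<in>map_f scale a ` T. u (map_e a \<psi>) *s \<psi> c)"
    proof (rule ext)
      fix c
      have "(\<Sum>\<psi>\<in>map_f scale a ` T. u (map_e a \<psi>) *s \<psi> c)
          = (\<Sum>t\<in>T. u (map_e a (map_f scale a t)) *s map_f scale a t c)"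
        by (rule sum.reindex[OF inj, unfolded comp_def])
      also have "\<dots> = (\<Sum>t\<in>T. u t *s map_f scale a t c)"
        using TM ef_id by (intro sum.cong) auto
      finally show "(\<Sum>t\<in>T. u t *s map_f scale a t c) = (\<Sum>\<psi>\<in>map_f scale a ` T. u (map_e a \<psi>) *s \<psi> c)"
        by simp
    qed
    finally show "\<exists>u. \<phi> = (\<lambda>c. \<Sum>\<psi>\<in>map_f scale a ` T. u \<psi> *s \<psi> c)"
      by (rule exI[of _ "\<lambda>\<psi>. u (map_e a \<psi>)"])
  qed
qed

end

theorem proposition2p5:
  fixes scale :: "'r::comm_ring_1 \<Rightarrow> 'm::ab_group_add \<Rightarrow> 'm"
    and a :: "'r set"
  assumes "noetherian_ring TYPE('r)"
    and "is_ideal a" and "a \<subseteq> jacobson_radical"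
    and "module scale" and "fin_gen_module scale"
  shows "(\<forall>m\<in>max_complete scale a. map_f scale a m \<in> hom_completion scale a)
    \<and> (\<forall>\<phi>\<in>hom_completion scale a. map_e a \<phi> \<in> max_complete scale a)
    \<and> (\<forall>m\<in>max_complete scale a. map_e a (map_f scale a m) = m)
    \<and> (\<forall>\<phi>\<in>hom_completion scale a. map_f scale a (map_e a \<phi>) = \<phi>)
    \<and> (\<forall>m\<in>max_complete scale a. \<forall>m'\<in>max_complete scale a.
         map_f scale a (m + m') = (\<lambda>c. map_f scale a m c + map_f scale a m' c))
    \<and> (\<forall>r. \<forall>m\<in>max_complete scale a. map_f scale a (scale r m) = (\<lambda>c. scale r (map_f scale a m c)))
    \<and> (\<forall>\<phi>\<in>hom_completion scale a. \<forall>\<psi>\<in>hom_completion scale a.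
         map_e a (\<lambda>c. \<phi> c + \<psi> c) = map_e a \<phi> + map_e a \<psi>)
    \<and> (\<forall>r. \<forall>\<phi>\<in>hom_completion scale a. map_e a (\<lambda>c. scale r (\<phi> c)) = scale r (map_e a \<phi>))
    \<and> (\<exists>\<Phi>. finite \<Phi> \<and> \<Phi> \<subseteq> hom_completion scale a \<and>
         (\<forall>\<phi>\<in>hom_completion scale a. \<exists>u. \<phi> = (\<lambda>c. \<Sum>\<psi>\<in>\<Phi>. scale (u \<psi>) (\<psi> c))))"
proof -
  have "ctx scale a" unfolding ctx_def ctx_axioms_def using assms by simp
  then interpret ctx scale a .
  show ?thesis
  proof (intro conjI ballI allI)
    show "map_f scale a m \<in> hom_completion scale a" if "m \<in> max_complete scale a" for m
      using mf_hom that by blast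
    show "map_e a \<phi> \<in> max_complete scale a" if "\<phi> \<in> hom_completion scale a" for \<phi>
      using hom_main[OF that] by (simp add: map_e_def)
    show "map_e a (map_f scale a m) = m" if "m \<in> max_complete scale a" for m
      using ef_id that by blast
    show "map_f scale a (map_e a \<phi>) = \<phi>" if "\<phi> \<in> hom_completion scale a" for \<phi>
      using fe_id that by blast
    show "map_f scale a (m + m') = (\<lambda>c. map_f scale a m c + map_f scale a m' c)"
      if "m \<in> max_complete scale a" "m' \<in> max_complete scale a" for m m'
      using mf_add that by blast
    show "map_f scale a (scale r m) = (\<lambda>c. scale r (map_f scale a m c))"
      if "m \<in> max_complete scale a" for r m
      using mf_scale that by blast
    show "map_e a (\<lambda>c. \<phi> c + \<psi> c) = map_e a \<phi> + map_e a \<psi>" for \<phi> \<psi>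
      by (simp add: map_e_def)
    show "map_e a (\<lambda>c. scale r (\<phi> c)) = scale r (map_e a \<phi>)" for r \<phi>
      by (simp add: map_e_def)
    show "\<exists>\<Phi>. finite \<Phi> \<and> \<Phi> \<subseteq> hom_completion scale a \<and>
         (\<forall>\<phi>\<in>hom_completion scale a. \<exists>u. \<phi> = (\<lambda>c. \<Sum>\<psi>\<in>\<Phi>. scale (u \<psi>) (\<psi> c)))"
      by (rule fin_hom)
  qed
qed


end
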